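(* Let $A$ be a basic connected finite dimensional algebra over an algebraically closed field $k$ whose ordinary quiver has no oriented cycles, and let $D\subseteq\mathsf{HH}^1(A)$. Then $D$ is diagonalizable if and only if every element of $D$ is diagonalizable and $[f,f']=0$ for all $f,f'\in D$.
   Context: Fix a complete set $e_1,\dots,e_n$ of primitive orthogonal idempotents of $A$, $E=\bigoplus ke_i$, $\mathfrak r$ the radical. $\mathsf{HH}^1(A)$ is identified with the Lie algebra $Der_0(A)/Int_0(A)$, where $Der_0(A)$ is the Lie algebra (commutator bracket) of derivations $d$ of $A$ with $d(e_i)=0$ for all $i$, and $Int_0(A)=\{\delta_e\colon a\mapsto ea-ae\mid e\in E\}$. A basis of $A$ is a $k$-basis $\mathcal B$ with $\mathcal B\subseteq\bigcup_{i,j}e_jAe_i$, $\{e_1,\dots,e_n\}\subseteq\mathcal B$, $\mathcal B\setminus\{e_1,\dots,e_n\}\subseteq\mathfrak r$. An element $f\in\mathsf{HH}^1(A)$ is diagonalizable (diagonal with respect to $\mathcal B$) if a derivation representing it is diagonalizable (diagonal with respect to the basis $\mathcal B$); this does not depend on the representative. A subset $D$ is diagonalizable if there is a single basis $\mathcal B$ of $A$ with respect to which every $f\in D$ is diagonal. *)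

theory Defs
  imports Main "HOL-Computational_Algebra.Polynomial"
begin

text \<open>The algebra A is the whole type 'a (a ring with 1), which is a k-vector space via
  the scalar multiplication sc, where k is the type 'k (a field).\<close>

definition alg_closed_field :: "'k::field itself \<Rightarrow> bool" where
  "alg_closed_field _ \<longleftrightarrow> (\<forall>p :: 'k poly. degree p \<ge> 1 \<longrightarrow> (\<exists>x. poly p x = 0))"

definition k_algebra :: "('k::field \<Rightarrow> 'a::ring_1 \<Rightarrow> 'a) \<Rightarrow> bool" where
  "k_algebra sc \<longleftrightarrow> vector_space sc \<and>
     (\<forall>c a b. sc c (a * b) = sc c a * b \<and> sc c (a * b) = a * sc c b)"

definition finite_dim_algebra :: "('k::field \<Rightarrow> 'a::ring_1 \<Rightarrow> 'a) \<Rightarrow> bool" where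
  "finite_dim_algebra sc \<longleftrightarrow> k_algebra sc \<and>
     (\<exists>S. finite S \<and> module.span sc S = UNIV)"

definition idempotent :: "'a::ring_1 \<Rightarrow> bool" where
  "idempotent x \<longleftrightarrow> x * x = x"

definition primitive_idempotent :: "'a::ring_1 \<Rightarrow> bool" where
  "primitive_idempotent x \<longleftrightarrow> idempotent x \<and> x \<noteq> 0 \<and>
     \<not> (\<exists>u v. idempotent u \<and> idempotent v \<and> u \<noteq> 0 \<and> v \<noteq> 0 \<and>
              u * v = 0 \<and> v * u = 0 \<and> x = u + v)"

definition complete_primitive_orthogonal_idempotents :: "nat \<Rightarrow> (nat \<Rightarrow> 'a::ring_1) \<Rightarrow> bool" where
  "complete_primitive_orthogonal_idempotents n e \<longleftrightarrow>
     (\<forall>i<n. primitive_idempotent (e i)) \<and>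
     (\<forall>i<n. \<forall>j<n. i \<noteq> j \<longrightarrow> e i * e j = 0) \<and>
     (\<Sum>i<n. e i) = 1"

definition left_ideal :: "'a::ring_1 set \<Rightarrow> bool" where
  "left_ideal I \<longleftrightarrow> 0 \<in> I \<and> (\<forall>x\<in>I. \<forall>y\<in>I. x + y \<in> I) \<and> (\<forall>x\<in>I. - x \<in> I) \<and>
     (\<forall>a. \<forall>x\<in>I. a * x \<in> I)"

definition maximal_left_ideal :: "'a::ring_1 set \<Rightarrow> bool" where
  "maximal_left_ideal I \<longleftrightarrow> left_ideal I \<and> I \<noteq> UNIV \<and>
     (\<forall>J. left_ideal J \<and> I \<subseteq> J \<longrightarrow> J = I \<or> J = UNIV)"

definition radical :: "'a::ring_1 set" where
  "radical = \<Inter> {I. maximal_left_ideal I}"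

definition radical_sq :: "('k::field \<Rightarrow> 'a::ring_1 \<Rightarrow> 'a) \<Rightarrow> 'a set" where
  "radical_sq sc = module.span sc {x * y | x y. x \<in> radical \<and> y \<in> radical}"

text \<open>Basic: the indecomposable projectives e_i A are pairwise non-isomorphic (as right A-modules).\<close>
definition basic_algebra :: "('k::field \<Rightarrow> 'a::ring_1 \<Rightarrow> 'a) \<Rightarrow> nat \<Rightarrow> (nat \<Rightarrow> 'a) \<Rightarrow> bool" where
  "basic_algebra sc n e \<longleftrightarrow>
     (\<forall>i<n. \<forall>j<n. i \<noteq> j \<longrightarrow>
        \<not> (\<exists>\<phi>. bij_betw \<phi> {e i * a | a. True} {e j * a | a. True} \<and>
               (\<forall>x\<in>{e i * a | a. True}. \<forall>y\<in>{e i * a | a. True}. \<phi> (x + y) = \<phi> x + \<phi> y) \<and>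
               (\<forall>x\<in>{e i * a | a. True}. \<forall>c. \<phi> (sc c x) = sc c (\<phi> x)) \<and>
               (\<forall>x\<in>{e i * a | a. True}. \<forall>a. \<phi> (x * a) = \<phi> x * a)))"

definition connected_algebra :: "'a::ring_1 itself \<Rightarrow> bool" where
  "connected_algebra _ \<longleftrightarrow> (0::'a) \<noteq> 1 \<and>
     (\<forall>c::'a. idempotent c \<and> (\<forall>a. c * a = a * c) \<longrightarrow> c = 0 \<or> c = 1)"

text \<open>Arrows of the ordinary quiver: there is an arrow i \<rightarrow> j iff e_j (r/r^2) e_i \<noteq> 0.\<close>
definition quiver_arrow :: "('k::field \<Rightarrow> 'a::ring_1 \<Rightarrow> 'a) \<Rightarrow> nat \<Rightarrow> (nat \<Rightarrow> 'a) \<Rightarrow> nat \<Rightarrow> nat \<Rightarrow> bool" where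
  "quiver_arrow sc n e i j \<longleftrightarrow> i < n \<and> j < n \<and>
     (\<exists>y\<in>radical. e j * y * e i \<notin> radical_sq sc)"

definition quiver_acyclic :: "('k::field \<Rightarrow> 'a::ring_1 \<Rightarrow> 'a) \<Rightarrow> nat \<Rightarrow> (nat \<Rightarrow> 'a) \<Rightarrow> bool" where
  "quiver_acyclic sc n e \<longleftrightarrow>
     (\<forall>i. (i, i) \<notin> {(i, j). quiver_arrow sc n e i j}\<^sup>+)"

definition Der0 :: "('k::field \<Rightarrow> 'a::ring_1 \<Rightarrow> 'a) \<Rightarrow> nat \<Rightarrow> (nat \<Rightarrow> 'a) \<Rightarrow> ('a \<Rightarrow> 'a) set" where
  "Der0 sc n e = {d. Vector_Spaces.linear sc sc d \<and>
      (\<forall>a b. d (a * b) = d a * b + a * d b) \<and> (\<forall>i<n. d (e i) = 0)}"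

definition Esub :: "('k::field \<Rightarrow> 'a::ring_1 \<Rightarrow> 'a) \<Rightarrow> nat \<Rightarrow> (nat \<Rightarrow> 'a) \<Rightarrow> 'a set" where
  "Esub sc n e = module.span sc (e ` {..<n})"

definition Int0 :: "('k::field \<Rightarrow> 'a::ring_1 \<Rightarrow> 'a) \<Rightarrow> nat \<Rightarrow> (nat \<Rightarrow> 'a) \<Rightarrow> ('a \<Rightarrow> 'a) set" where
  "Int0 sc n e = {(\<lambda>a. x * a - a * x) | x. x \<in> Esub sc n e}"

definition HH1_rel :: "('k::field \<Rightarrow> 'a::ring_1 \<Rightarrow> 'a) \<Rightarrow> nat \<Rightarrow> (nat \<Rightarrow> 'a) \<Rightarrow> (('a \<Rightarrow> 'a) \<times> ('a \<Rightarrow> 'a)) set" where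
  "HH1_rel sc n e = {(d, d'). d \<in> Der0 sc n e \<and> d' \<in> Der0 sc n e \<and>
                                  (\<lambda>a. d a - d' a) \<in> Int0 sc n e}"

definition HH1 :: "('k::field \<Rightarrow> 'a::ring_1 \<Rightarrow> 'a) \<Rightarrow> nat \<Rightarrow> (nat \<Rightarrow> 'a) \<Rightarrow> ('a \<Rightarrow> 'a) set set" where
  "HH1 sc n e = Der0 sc n e // HH1_rel sc n e"

definition HH1_class :: "('k::field \<Rightarrow> 'a::ring_1 \<Rightarrow> 'a) \<Rightarrow> nat \<Rightarrow> (nat \<Rightarrow> 'a) \<Rightarrow> ('a \<Rightarrow> 'a) \<Rightarrow> ('a \<Rightarrow> 'a) set" where
  "HH1_class sc n e d = HH1_rel sc n e `` {d}"

definition HH1_zero :: "('k::field \<Rightarrow> 'a::ring_1 \<Rightarrow> 'a) \<Rightarrow> nat \<Rightarrow> (nat \<Rightarrow> 'a) \<Rightarrow> ('a \<Rightarrow> 'a) set" where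
  "HH1_zero sc n e = HH1_class sc n e (\<lambda>_. 0)"

text \<open>Lie bracket induced by the commutator bracket on Der_0 (computed on chosen representatives).\<close>
definition HH1_bracket :: "('k::field \<Rightarrow> 'a::ring_1 \<Rightarrow> 'a) \<Rightarrow> nat \<Rightarrow> (nat \<Rightarrow> 'a) \<Rightarrow>
    ('a \<Rightarrow> 'a) set \<Rightarrow> ('a \<Rightarrow> 'a) set \<Rightarrow> ('a \<Rightarrow> 'a) set" where
  "HH1_bracket sc n e f g =
     (let d = (SOME d. d \<in> f); d' = (SOME d'. d' \<in> g)
      in HH1_class sc n e (\<lambda>a. d (d' a) - d' (d a)))"

definition is_vs_basis :: "('k::field \<Rightarrow> 'a::ring_1 \<Rightarrow> 'a) \<Rightarrow> 'a set \<Rightarrow> bool" where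
  "is_vs_basis sc B \<longleftrightarrow> module.independent sc B \<and> module.span sc B = UNIV"

definition diagonal_wrt :: "('k::field \<Rightarrow> 'a::ring_1 \<Rightarrow> 'a) \<Rightarrow> ('a \<Rightarrow> 'a) \<Rightarrow> 'a set \<Rightarrow> bool" where
  "diagonal_wrt sc d B \<longleftrightarrow> (\<forall>b\<in>B. \<exists>c. d b = sc c b)"

definition diagonalizable_map :: "('k::field \<Rightarrow> 'a::ring_1 \<Rightarrow> 'a) \<Rightarrow> ('a \<Rightarrow> 'a) \<Rightarrow> bool" where
  "diagonalizable_map sc d \<longleftrightarrow> (\<exists>B. is_vs_basis sc B \<and> diagonal_wrt sc d B)"

definition algebra_basis :: "('k::field \<Rightarrow> 'a::ring_1 \<Rightarrow> 'a) \<Rightarrow> nat \<Rightarrow> (nat \<Rightarrow> 'a) \<Rightarrow> 'a set \<Rightarrow> bool" where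
  "algebra_basis sc n e B \<longleftrightarrow> is_vs_basis sc B \<and>
     B \<subseteq> (\<Union>i<n. \<Union>j<n. {e j * a * e i | a. True}) \<and>
     e ` {..<n} \<subseteq> B \<and> B - e ` {..<n} \<subseteq> radical"

definition HH1_diagonalizable :: "('k::field \<Rightarrow> 'a::ring_1 \<Rightarrow> 'a) \<Rightarrow> ('a \<Rightarrow> 'a) set \<Rightarrow> bool" where
  "HH1_diagonalizable sc f \<longleftrightarrow> (\<exists>d\<in>f. diagonalizable_map sc d)"

definition HH1_diagonal_wrt :: "('k::field \<Rightarrow> 'a::ring_1 \<Rightarrow> 'a) \<Rightarrow> ('a \<Rightarrow> 'a) set \<Rightarrow> 'a set \<Rightarrow> bool" where
  "HH1_diagonal_wrt sc f B \<longleftrightarrow> (\<exists>d\<in>f. diagonal_wrt sc d B)"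

definition HH1_set_diagonalizable :: "('k::field \<Rightarrow> 'a::ring_1 \<Rightarrow> 'a) \<Rightarrow> nat \<Rightarrow> (nat \<Rightarrow> 'a) \<Rightarrow>
    ('a \<Rightarrow> 'a) set set \<Rightarrow> bool" where
  "HH1_set_diagonalizable sc n e D \<longleftrightarrow>
     (\<exists>B. algebra_basis sc n e B \<and> (\<forall>f\<in>D. HH1_diagonal_wrt sc f B))"

end

theory Submission
  imports Defs
begin
lemma bez_lin:
  fixes r :: "'k::field poly"
  assumes "poly r l \<noteq> 0"
  shows "\<exists>s1 s2. s1 * [:-l,1:]^a + s2 * r = 1"
proof (induction a)
  case 0 then show ?case by (intro exI[of _ 1] exI[of _ 0]) simp
next
  case (Suc a)
  define L where "L = [:-l,1:]"
  from Suc obtain s1 s2 where IH: "s1 * L^a + s2 * r = 1" unfolding L_def by blast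
  define t where "t = synthetic_div s1 l"
  define C where "C = [:poly s1 l:]"
  define r' where "r' = synthetic_div r l"
  define B where "B = [:poly r l:]"
  define Q where "Q = [:poly s1 l / poly r l:]"
  have s1: "s1 = L*t + C" unfolding L_def t_def C_def by (rule synthetic_div_correct'[symmetric])
  have r: "r = L*r' + B" unfolding L_def r'_def B_def by (rule synthetic_div_correct'[symmetric])
  have QB: "Q * B = C" unfolding Q_def B_def C_def using assms by simp
  have "(t - Q*r') * L^Suc a + (s2 + Q * L^a) * r = t*L*L^a - Q*r'*L*L^a + s2*r + Q*L^a*(L*r' + B)"
    using r by (simp add: algebra_simps)
  also have "\<dots> = (L*t + Q*B) * L^a + s2*r" by (simp add: algebra_simps)
  also have "\<dots> = 1" using IH s1 QB by simp
  finally show ?case unfolding L_def by blast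
qed

definition nilp :: "'a::ring_1 \<Rightarrow> bool" where "nilp x \<longleftrightarrow> (\<exists>m. x^m = 0)"

locale alg = vector_space sc for sc :: "'k::field \<Rightarrow> 'a::ring_1 \<Rightarrow> 'a" +
  fixes SB :: "'a set"
  assumes scm1: "sc c (a*b) = sc c a * b" and scm2: "sc c (a*b) = a * sc c b"
  and SBfin: "finite SB" and SBspan: "span SB = UNIV"
  and algc: "alg_closed_field TYPE('k)"
begin

lemma sc_1: "sc c x = sc c 1 * x" using scm1[of c 1 x] by simp
lemma sc_1': "sc c x = x * sc c 1" using scm2[of c x 1] by simp
lemma sc_comm: "sc c 1 * x = x * sc c 1" using sc_1 sc_1' by metis
lemma sc_mult_left: "sc c a * b = sc c (a*b)" using scm1 by simp
lemma sc_mult_right: "a * sc c b = sc c (a*b)" using scm2 by simp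

definition pev :: "'a \<Rightarrow> 'k poly \<Rightarrow> 'a" where
  "pev z p = (\<Sum>k\<le>degree p. sc (coeff p k) (z^k))"

lemma pev_bound: assumes "degree p < M" shows "pev z p = (\<Sum>k<M. sc (coeff p k) (z^k))"
proof -
  have "(\<Sum>k<M. sc (coeff p k) (z^k)) = (\<Sum>k\<le>degree p. sc (coeff p k) (z^k))"
    by (rule sum.mono_neutral_right) (use assms in \<open>auto simp: coeff_eq_0\<close>)
  thus ?thesis by (simp add: pev_def)
qed

lemma pev_add: "pev z (p + q) = pev z p + pev z q"
proof -
  define M where "M = Suc (degree p + degree q)"
  have "degree (p+q) < M" unfolding M_def using degree_add_le_max[of p q] by linarith
  moreover have "degree p < M" "degree q < M" unfolding M_def by auto
  ultimately show ?thesis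
    by (simp add: pev_bound[of _ M] scale_left_distrib sum.distrib)
qed

lemma pev_smult: "pev z (smult a p) = sc a (pev z p)"
proof -
  define M where "M = Suc (degree p)"
  have "degree (smult a p) < M" unfolding M_def using degree_smult_le[of a p] by linarith
  moreover have "degree p < M" unfolding M_def by auto
  ultimately show ?thesis
    by (simp add: pev_bound[of _ M] scale_sum_right)
qed

lemma pev_pCons: "pev z (pCons a p) = sc a 1 + z * pev z p"
proof -
  define M where "M = Suc (degree p)"
  have d1: "degree (pCons a p) < Suc M" unfolding M_def using degree_pCons_le[of a p] by linarith
  have d2: "degree p < M" unfolding M_def by auto
  have "pev z (pCons a p) = (\<Sum>k<Suc M. sc (coeff (pCons a p) k) (z^k))" by (rule pev_bound[OF d1])
  also have "\<dots> = sc a 1 + (\<Sum>k<M. sc (coeff p k) (z^Suc k))"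
    by (subst sum.lessThan_Suc_shift) simp
  also have "(\<Sum>k<M. sc (coeff p k) (z^Suc k)) = z * (\<Sum>k<M. sc (coeff p k) (z^k))"
    by (simp add: sum_distrib_left sc_mult_right)
  also have "(\<Sum>k<M. sc (coeff p k) (z^k)) = pev z p" by (rule pev_bound[OF d2, symmetric])
  finally show ?thesis .
qed

lemma pev_0[simp]: "pev z 0 = 0" by (simp add: pev_def)

lemma pev_mult: "pev z (p * q) = pev z p * pev z q"
proof (induction p rule: pCons_induct)
  case 0 then show ?case by simp
next
  case (pCons a p)
  then show ?case
    by (simp add: pev_add pev_smult pev_pCons distrib_right sc_1[of a "pev z q"] mult.assoc)
qed

lemma pev_const: "pev z [:c:] = sc c 1" by (simp add: pev_pCons)
lemma pev_one[simp]: "pev z 1 = 1" by (simp add: one_pCons pev_pCons)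
lemma pev_lin: "pev z [:-l, 1:] = z - sc l 1" by (simp add: pev_pCons)
lemma pev_X: "pev z [:0, 1:] = z" by (simp add: pev_pCons)

lemma pev_power: "pev z (p ^ m) = (pev z p) ^ m"
  by (induction m) (simp_all add: pev_mult)

lemma pev_monom: "pev z (monom c k) = sc c (z ^ k)"
  by (simp add: monom_altdef pev_smult pev_power pev_X)

lemma pev_sum: "pev z (sum f A) = (\<Sum>x\<in>A. pev z (f x))"
  by (induction A rule: infinite_finite_induct) (simp_all add: pev_add)

lemma pev_comm: "pev z p * pev z q = pev z q * pev z p"
  by (metis pev_mult mult.commute)

lemma pev_commute: assumes "y * z = z * y" shows "y * pev z p = pev z p * y"
proof (induction p rule: pCons_induct)
  case 0 then show ?case by simp
next
  case (pCons a p)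
  have "y * pev z (pCons a p) = y * sc a 1 + y * z * pev z p" by (simp add: pev_pCons distrib_left mult.assoc)
  also have "\<dots> = sc a 1 * y + z * (y * pev z p)" by (simp add: sc_comm assms mult.assoc)
  also have "\<dots> = pev z (pCons a p) * y" by (simp add: pCons.IH pev_pCons distrib_right mult.assoc)
  finally show ?case .
qed

lemma ann_poly: "\<exists>p. p \<noteq> 0 \<and> pev z p = 0"
proof -
  define N where "N = card SB"
  have key: "\<exists>p. p \<noteq> 0 \<and> pev z p = 0" if "k \<le> N" "c k \<noteq> 0" "(\<Sum>j\<le>N. sc (c j) (z^j)) = 0" for c k
  proof -
    define p where "p = (\<Sum>j\<le>N. monom (c j) j)"
    have "coeff p k = c k" unfolding p_def using that(1) by (rule coeff_sum_monom)
    hence "p \<noteq> 0" using that(2) by auto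
    moreover have "pev z p = 0" unfolding p_def pev_sum pev_monom using that(3) .
    ultimately show ?thesis by blast
  qed
  show ?thesis
  proof (cases "inj_on (\<lambda>k. z^k) {..N}")
    case False
    then obtain a b where ab: "a \<le> N" "b \<le> N" "a \<noteq> b" "z^a = z^b"
      unfolding inj_on_def by auto
    define c where "c j = (if j = a then (1::'k) else if j = b then -1 else 0)" for j
    have "(\<Sum>j\<le>N. sc (c j) (z^j)) = (\<Sum>j\<in>{a,b}. sc (c j) (z^j))"
      by (rule sum.mono_neutral_right) (use ab in \<open>auto simp: c_def\<close>)
    also have "\<dots> = 0" using ab by (simp add: c_def)
    finally show ?thesis using key[of a c] ab by (simp add: c_def)
  next
    case True
    define P where "P = (\<lambda>k. z^k) ` {..N}"
    have cardP: "card P = Suc N" unfolding P_def using True by (simp add: card_image)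
    have "dependent P"
    proof (rule ccontr)
      assume "\<not> dependent P"
      from independent_span_bound[OF SBfin this] SBspan have "card P \<le> card SB" by auto
      with cardP show False unfolding N_def by simp
    qed
    then obtain t u where tu: "finite t" "t \<subseteq> P" "(\<Sum>v\<in>t. sc (u v) v) = 0" "\<exists>v\<in>t. u v \<noteq> 0"
      unfolding dependent_explicit by blast
    define c where "c j = (if z^j \<in> t then u (z^j) else 0)" for j
    have "(\<Sum>j\<le>N. sc (c j) (z^j)) = (\<Sum>j\<in>{j\<in>{..N}. z^j \<in> t}. sc (c j) (z^j))"
      by (rule sum.mono_neutral_right) (auto simp: c_def)
    also have "\<dots> = (\<Sum>j\<in>{j\<in>{..N}. z^j \<in> t}. sc (u (z^j)) (z^j))"
      by (rule sum.cong) (auto simp: c_def)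
    also have "\<dots> = (\<Sum>v\<in>t. sc (u v) v)"
    proof -
      have "(\<lambda>k. z^k) ` {j\<in>{..N}. z^j \<in> t} = t" using tu(2) unfolding P_def by auto
      moreover have "inj_on (\<lambda>k. z^k) {j\<in>{..N}. z^j \<in> t}" using True by (auto intro: inj_on_subset)
      ultimately show ?thesis using sum.reindex[of "\<lambda>k. z^k" "{j\<in>{..N}. z^j \<in> t}" "\<lambda>v. sc (u v) v"]
        by simp
    qed
    finally have s0: "(\<Sum>j\<le>N. sc (c j) (z^j)) = 0" using tu(3) by simp
    from tu(4) obtain v where "v \<in> t" "u v \<noteq> 0" by blast
    with tu(2) obtain k where "k \<le> N" "v = z^k" unfolding P_def by auto
    hence "c k \<noteq> 0" using \<open>v \<in> t\<close> \<open>u v \<noteq> 0\<close> by (simp add: c_def)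
    from key[OF \<open>k \<le> N\<close> this s0] show ?thesis .
  qed
qed

end

context alg begin

lemma pow_idem_comm: fixes q y :: 'a assumes "q*q = q" "q*y = y*q" "m \<ge> 1" shows "(q*y)^m = q*y^m"
  using assms(3)
proof (induction m)
  case 0 then show ?case by simp
next
  case (Suc m)
  show ?case
  proof (cases "m = 0")
    case True then show ?thesis by (simp add: mult.assoc)
  next
    case False
    hence "(q*y)^m = q*y^m" using Suc by simp
    hence "(q*y)^Suc m = q*y*(q*y^m)" by (simp add: power_Suc)
    also have "\<dots> = q*q*y*y^m" by (metis assms(2) mult.assoc)
    also have "\<dots> = q*y^Suc m" by (simp add: assms(1) mult.assoc)
    finally show ?thesis .
  qed
qed

lemma local_lemma:
  assumes prim: "primitive_idempotent q" and qz: "q*z = z" "z*q = z"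
  shows "\<exists>l. nilp (z - sc l q)"
proof -
  have qq: "q*q = q" and q0: "q \<noteq> 0" using prim unfolding primitive_idempotent_def idempotent_def by auto
  have qcomm: "q * pev z r = pev z r * q" for r by (rule pev_commute) (simp add: qz)
  have qA: "q * (pev z r * y) = pev z r * (q * y)" for r y by (metis qcomm mult.assoc)
  have main: "p \<noteq> 0 \<Longrightarrow> q * pev z p = 0 \<Longrightarrow> \<exists>l. nilp (z - sc l q)" for p
  proof (induction p rule: measure_induct_rule[where f=degree])
    case (less p)
    show ?case
    proof (cases "degree p = 0")
      case True
      then obtain c where p: "p = [:c:]" by (metis degree_eq_zeroE)
      with less have "c \<noteq> 0" by auto
      have "q * pev z p = sc c q" by (simp add: p pev_const sc_mult_right)
      with less \<open>c \<noteq> 0\<close> q0 show ?thesis by simp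
    next
      case False
      have "\<exists>x. poly p x = 0" using algc False unfolding alg_closed_field_def
        by (metis One_nat_def Suc_leI neq0_conv)
      then obtain l where "poly p l = 0" by blast
      define a where "a = order l p"
      have a0: "a \<noteq> 0" using \<open>poly p l = 0\<close> less.prems(1) order_root unfolding a_def by blast
      define L where "L = [:-l, 1:]"
      obtain r where pr: "p = L^a * r" and ndvd: "\<not> L dvd r"
        using order_decomp[OF less.prems(1), of l] unfolding a_def L_def by blast
      have "poly r l \<noteq> 0" using ndvd unfolding L_def by (simp add: poly_eq_0_iff_dvd)
      then obtain s1 s2 where bez: "s1 * L^a + s2 * r = 1" using bez_lin unfolding L_def by blast
      define F where "F = pev z (s2 * r)"
      define G where "G = pev z (s1 * L^a)"
      have FG: "F + G = 1" unfolding F_def G_def using arg_cong[OF bez, of "pev z"]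
        by (simp add: pev_add add.commute)
      have qp: "q * pev z p = 0" by (rule less.prems(2))
      have z1: "q * pev z (t * p) = 0" for t
        by (simp add: pev_mult qA qp)
      define u where "u = q * F"
      define w where "w = q * G"
      have FGp: "F * G = pev z (s1 * s2 * p)" unfolding F_def G_def pev_mult[symmetric]
        by (simp add: pr ac_simps)
      have uw: "u * w = 0"
      proof -
        have "u * w = q * (F * q) * G" unfolding u_def w_def by (simp add: mult.assoc)
        also have "\<dots> = q * q * (F * G)" unfolding F_def by (metis qcomm mult.assoc)
        also have "\<dots> = 0" using z1 by (simp add: qq FGp)
        finally show ?thesis .
      qed
      have wu: "w * u = 0"
      proof -
        have "w * u = q * (G * q) * F" unfolding u_def w_def by (simp add: mult.assoc)
        also have "\<dots> = q * q * (F * G)" unfolding F_def G_def by (metis qcomm mult.assoc pev_comm)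
        also have "\<dots> = 0" using z1 by (simp add: qq FGp)
        finally show ?thesis .
      qed
      have upw: "u + w = q" unfolding u_def w_def by (simp add: distrib_left[symmetric] FG)
      have uu: "u * u = u"
      proof -
        have "u * u = u * (u + w) - u * w" by (simp add: algebra_simps)
        also have "\<dots> = u * q" using uw upw by simp
        also have "\<dots> = u" unfolding u_def F_def by (metis mult.assoc qcomm qq)
        finally show ?thesis .
      qed
      have ww: "w * w = w"
      proof -
        have "w * w = (u + w) * w - u * w" by (simp add: algebra_simps)
        also have "\<dots> = q * w" using uw upw by simp
        also have "\<dots> = w" unfolding w_def by (simp add: mult.assoc[symmetric] qq)
        finally show ?thesis .
      qed
      have "u = 0 \<or> w = 0"
        using prim uu ww uw wu upw unfolding primitive_idempotent_def idempotent_def by metis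
      thus ?thesis
      proof
        assume "u = 0"
        have "q * pev z r = q * pev z r * (F + G)" by (simp add: FG)
        also have "\<dots> = q * pev z r * F + q * (pev z r * G)" by (simp add: distrib_left mult.assoc)
        also have "\<dots> = pev z r * u + q * pev z (s1 * p)"
        proof -
          have "q * pev z r * F = pev z r * u" unfolding u_def by (metis qcomm mult.assoc)
          moreover have "pev z r * G = pev z (s1 * p)" unfolding G_def pev_mult[symmetric] by (simp add: pr ac_simps)
          ultimately show ?thesis by simp
        qed
        also have "\<dots> = 0" using \<open>u = 0\<close> z1 by simp
        finally have qr: "q * pev z r = 0" .
        have r0: "r \<noteq> 0" using pr less.prems(1) by auto
        have "degree p = degree (L^a) + degree r" using pr r0
          by (simp add: degree_mult_eq L_def)
        moreover have "degree (L^a) = a" unfolding L_def by (simp add: degree_linear_power)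
        ultimately have "degree r < degree p" using a0 by simp
        thus ?thesis using less.IH r0 qr by blast
      next
        assume "w = 0"
        have "q * pev z (L^a) = q * pev z (L^a) * (F + G)" by (simp add: FG)
        also have "\<dots> = q * (pev z (L^a) * F) + q * pev z (L^a) * G" by (simp add: distrib_left mult.assoc)
        also have "\<dots> = q * pev z (s2 * p) + pev z (L^a) * w"
        proof -
          have "q * pev z (L^a) * G = pev z (L^a) * w" unfolding w_def by (metis qcomm mult.assoc)
          moreover have "pev z (L^a) * F = pev z (s2 * p)" unfolding F_def pev_mult[symmetric] by (simp add: pr ac_simps)
          ultimately show ?thesis by simp
        qed
        also have "\<dots> = 0" using \<open>w = 0\<close> z1 by simp
        finally have qL: "q * (z - sc l 1)^a = 0" by (simp add: pev_power L_def pev_lin)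
        have "z - sc l q = q * (z - sc l 1)" by (simp add: algebra_simps qz sc_mult_right)
        moreover have "q * (z - sc l 1) = (z - sc l 1) * q"
          by (simp add: algebra_simps qz sc_mult_right sc_mult_left)
        ultimately have "(z - sc l q)^a = q * (z - sc l 1)^a"
          using pow_idem_comm[OF qq, of "z - sc l 1" a] a0 by simp
        with qL show ?thesis unfolding nilp_def by auto
      qed
    qed
  qed
  obtain p where "p \<noteq> 0" "pev z p = 0" using ann_poly by blast
  thus ?thesis using main[of p] by simp
qed

end

lemma left_ideal_UNIV: "left_ideal (UNIV::'a::ring_1 set)" by (simp add: left_ideal_def)

lemma left_ideal_one: "left_ideal I \<Longrightarrow> (1::'a::ring_1) \<in> I \<Longrightarrow> I = UNIV"
  unfolding left_ideal_def by (metis UNIV_eq_I mult.right_neutral)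

lemma exists_maximal_left_ideal:
  fixes I :: "'a::ring_1 set"
  assumes "left_ideal I" "1 \<notin> I"
  shows "\<exists>M. maximal_left_ideal M \<and> I \<subseteq> M"
proof -
  define S where "S = {J. left_ideal J \<and> I \<subseteq> J \<and> (1::'a) \<notin> J}"
  have "\<exists>U\<in>S. \<forall>X\<in>C. X \<subseteq> U" if C: "C \<in> chains S" for C
  proof (cases "C = {}")
    case True then show ?thesis using assms by (auto simp: S_def)
  next
    case False
    have CS: "C \<subseteq> S" using chainsD2[OF C] .
    have "left_ideal (\<Union>C)" unfolding left_ideal_def
    proof (intro conjI ballI allI)
      show "0 \<in> \<Union>C" using False CS by (auto simp: S_def left_ideal_def)
      fix x y assume "x \<in> \<Union>C" "y \<in> \<Union>C"
      then obtain X Y where XY: "X \<in> C" "Y \<in> C" "x \<in> X" "y \<in> Y" by auto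
      from chainsD[OF C XY(1,2)] have "X \<subseteq> Y \<or> Y \<subseteq> X" .
      thus "x + y \<in> \<Union>C" using XY CS unfolding S_def left_ideal_def by blast
    next
      fix x assume "x \<in> \<Union>C"
      then obtain X where "X \<in> C" "x \<in> X" by auto
      thus "- x \<in> \<Union>C" using CS unfolding S_def left_ideal_def by blast
    next
      fix a x assume "x \<in> \<Union>C"
      then obtain X where "X \<in> C" "x \<in> X" by auto
      thus "a * x \<in> \<Union>C" using CS unfolding S_def left_ideal_def by blast
    qed
    moreover have "I \<subseteq> \<Union>C" "1 \<notin> \<Union>C" using False CS by (auto simp: S_def)
    ultimately show ?thesis unfolding S_def by blast
  qed
  then obtain M where M: "M \<in> S" "\<forall>X\<in>S. M \<subseteq> X \<longrightarrow> X = M" using Zorn_Lemma2[of S] by blast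
  have "maximal_left_ideal M" unfolding maximal_left_ideal_def
  proof (intro conjI allI impI)
    show "left_ideal M" using M by (simp add: S_def)
    show "M \<noteq> UNIV" using M by (auto simp: S_def)
    fix J assume J: "left_ideal J \<and> M \<subseteq> J"
    show "J = M \<or> J = UNIV"
    proof (cases "1 \<in> J")
      case True then show ?thesis using J left_ideal_one by blast
    next
      case False
      hence "J \<in> S" using J M by (auto simp: S_def)
      thus ?thesis using M J by blast
    qed
  qed
  thus ?thesis using M by (auto simp: S_def)
qed

lemma left_ideal_Inter: "(\<And>I. I \<in> F \<Longrightarrow> left_ideal I) \<Longrightarrow> left_ideal (\<Inter>F)"
  unfolding left_ideal_def by blast

lemma radical_left_ideal: "left_ideal (radical::'a::ring_1 set)"
  unfolding radical_def by (rule left_ideal_Inter) (simp add: maximal_left_ideal_def)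

lemma rad_char:
  fixes x :: "'a::ring_1"
  shows "x \<in> radical \<longleftrightarrow> (\<forall>a. \<exists>u. u * (1 - a * x) = 1)"
proof
  assume x: "x \<in> radical"
  show "\<forall>a. \<exists>u. u * (1 - a * x) = 1"
  proof (rule ccontr)
    assume "\<not> ?thesis"
    then obtain a where na: "\<forall>u. u * (1 - a * x) \<noteq> 1" by blast
    define I where "I = {b * (1 - a * x) | b. True}"
    have "left_ideal I" unfolding left_ideal_def I_def
    proof (intro conjI ballI allI)
      show "0 \<in> {b * (1 - a * x) |b. True}" by (auto intro: exI[of _ 0])
      fix p q assume "p \<in> {b * (1 - a * x) |b. True}" "q \<in> {b * (1 - a * x) |b. True}"
      then obtain b1 b2 where "p = b1 * (1 - a * x)" "q = b2 * (1 - a * x)" by auto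
      thus "p + q \<in> {b * (1 - a * x) |b. True}" by (auto intro!: exI[of _ "b1 + b2"] simp: distrib_right)
    next
      fix p assume "p \<in> {b * (1 - a * x) |b. True}"
      then obtain b1 where "p = b1 * (1 - a * x)" by auto
      thus "- p \<in> {b * (1 - a * x) |b. True}" by (auto intro!: exI[of _ "- b1"])
    next
      fix c p assume "p \<in> {b * (1 - a * x) |b. True}"
      then obtain b1 where "p = b1 * (1 - a * x)" by auto
      thus "c * p \<in> {b * (1 - a * x) |b. True}" by (auto intro!: exI[of _ "c * b1"] simp: mult.assoc)
    qed
    moreover have "1 \<notin> I" using na unfolding I_def by auto
    ultimately obtain M where M: "maximal_left_ideal M" "I \<subseteq> M" using exists_maximal_left_ideal by blast
    have "x \<in> M" using x M(1) unfolding radical_def by auto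
    hence "a * x \<in> M" using M(1) unfolding maximal_left_ideal_def left_ideal_def by auto
    moreover have "1 * (1 - a * x) \<in> I" unfolding I_def by blast
    hence "1 - a * x \<in> M" using M(2) by auto
    ultimately have "1 \<in> M" using M(1) unfolding maximal_left_ideal_def left_ideal_def
      by (metis diff_add_cancel)
    thus False using M(1) left_ideal_one unfolding maximal_left_ideal_def by blast
  qed
next
  assume H: "\<forall>a. \<exists>u. u * (1 - a * x) = 1"
  show "x \<in> radical"
  proof (rule ccontr)
    assume "x \<notin> radical"
    then obtain M where M: "maximal_left_ideal M" "x \<notin> M" unfolding radical_def by auto
    have LM: "left_ideal M" using M unfolding maximal_left_ideal_def by auto
    define J where "J = {m + b * x | m b. m \<in> M}"
    have "left_ideal J" unfolding left_ideal_def J_def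
    proof (intro conjI ballI allI)
      show "0 \<in> {m + b * x |m b. m \<in> M}" using LM unfolding left_ideal_def by (auto intro!: exI[of _ 0])
      fix p q assume "p \<in> {m + b * x |m b. m \<in> M}" "q \<in> {m + b * x |m b. m \<in> M}"
      then obtain m1 b1 m2 b2 where "p = m1 + b1 * x" "q = m2 + b2 * x" "m1 \<in> M" "m2 \<in> M" by auto
      moreover have "p + q = (m1 + m2) + (b1 + b2) * x" using \<open>p = m1 + b1 * x\<close> \<open>q = m2 + b2 * x\<close>
        by (simp add: algebra_simps)
      moreover have "m1 + m2 \<in> M" using LM \<open>m1 \<in> M\<close> \<open>m2 \<in> M\<close> unfolding left_ideal_def by blast
      ultimately show "p + q \<in> {m + b * x |m b. m \<in> M}" by blast
    next
      fix p assume "p \<in> {m + b * x |m b. m \<in> M}"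
      then obtain m1 b1 where "p = m1 + b1 * x" "m1 \<in> M" by auto
      moreover have "- p = (- m1) + (- b1) * x" using \<open>p = m1 + b1 * x\<close> by simp
      moreover have "- m1 \<in> M" using LM \<open>m1 \<in> M\<close> unfolding left_ideal_def by blast
      ultimately show "- p \<in> {m + b * x |m b. m \<in> M}" by blast
    next
      fix a p assume "p \<in> {m + b * x |m b. m \<in> M}"
      then obtain m1 b1 where "p = m1 + b1 * x" "m1 \<in> M" by auto
      moreover have "a * p = (a * m1) + (a * b1) * x" using \<open>p = m1 + b1 * x\<close> by (simp add: algebra_simps)
      moreover have "a * m1 \<in> M" using LM \<open>m1 \<in> M\<close> unfolding left_ideal_def by blast
      ultimately show "a * p \<in> {m + b * x |m b. m \<in> M}" by blast
    qed
    moreover have "M \<subseteq> J" unfolding J_def by (auto, metis add.right_neutral mult_zero_left)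
    moreover have "x \<in> J" using LM unfolding J_def left_ideal_def by (metis (mono_tags, lifting) add_0 mem_Collect_eq mult_1)
    ultimately have "J = UNIV" using M unfolding maximal_left_ideal_def by blast
    hence "1 \<in> J" by simp
    then obtain m b where mb: "1 = m + b * x" "m \<in> M" unfolding J_def by auto
    obtain u where "u * (1 - b * x) = 1" using H by blast
    hence "u * m = 1" using mb by (metis add_diff_cancel_right')
    hence "1 \<in> M" using mb LM unfolding left_ideal_def by metis
    thus False using M(1) left_ideal_one unfolding maximal_left_ideal_def by blast
  qed
qed

lemma radical_right: 
  fixes x :: "'a::ring_1"
  assumes "x \<in> radical" shows "x * b \<in> radical"
  unfolding rad_char
proof
  fix a
  obtain w where w: "w * (1 - (b * a) * x) = 1" using assms unfolding rad_char by blast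
  have "(1 + a * x * w * b) * (1 - a * (x * b)) = 1 - a*x*b + a*x*(w * (1 - b*a*x))*b"
    by (simp add: algebra_simps)
  also have "\<dots> = 1" using w by (simp add: mult.assoc)
  finally show "\<exists>u. u * (1 - a * (x * b)) = 1" by blast
qed

lemma radical_left: "x \<in> (radical::'a::ring_1 set) \<Longrightarrow> a * x \<in> radical"
  using radical_left_ideal unfolding left_ideal_def by blast
lemma radical_add: "x \<in> (radical::'a::ring_1 set) \<Longrightarrow> y \<in> radical \<Longrightarrow> x + y \<in> radical"
  using radical_left_ideal unfolding left_ideal_def by blast
lemma radical_zero: "(0::'a::ring_1) \<in> radical"
  using radical_left_ideal unfolding left_ideal_def by blast

lemma geom_left_inv:
  fixes z :: "'a::ring_1"
  shows "(\<Sum>k<N. z^k) * (1 - z) = 1 - z^N"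
proof (induction N)
  case 0 then show ?case by simp
next
  case (Suc N)
  have "(\<Sum>k<Suc N. z^k) * (1 - z) = (\<Sum>k<N. z^k) * (1 - z) + z^N * (1 - z)"
    by (simp add: distrib_right)
  also have "\<dots> = 1 - z^N + z^N * (1 - z)" using Suc by simp
  also have "\<dots> = 1 - z^Suc N" by (simp add: algebra_simps power_Suc2 power_commutes)
  finally show ?case .
qed

lemma nilp_left_inv: "nilp (z::'a::ring_1) \<Longrightarrow> \<exists>u. u * (1 - z) = 1"
proof -
  assume "nilp z"
  then obtain m where "z^m = 0" unfolding nilp_def by blast
  thus ?thesis using geom_left_inv[of z m] by auto
qed

context alg begin

lemma left_ideal_subspace: "left_ideal I \<Longrightarrow> subspace I"
  unfolding subspace_def left_ideal_def by (metis sc_1)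

lemma radical_subspace: "subspace radical"
  by (rule left_ideal_subspace[OF radical_left_ideal])

end

locale alg2 = alg sc SB for sc :: "'k::field \<Rightarrow> 'a::ring_1 \<Rightarrow> 'a" and SB +
  fixes n :: nat and e :: "nat \<Rightarrow> 'a"
  assumes cpoi: "complete_primitive_orthogonal_idempotents n e"
  and basic: "basic_algebra sc n e"
  and acyc: "quiver_acyclic sc n e"
begin

lemma e_prim: "i < n \<Longrightarrow> primitive_idempotent (e i)"
  using cpoi unfolding complete_primitive_orthogonal_idempotents_def by blast
lemma e_idem: "i < n \<Longrightarrow> e i * e i = e i"
  using e_prim unfolding primitive_idempotent_def idempotent_def by blast
lemma e_nz: "i < n \<Longrightarrow> e i \<noteq> 0"
  using e_prim unfolding primitive_idempotent_def by blast
lemma e_orth: "i < n \<Longrightarrow> j < n \<Longrightarrow> i \<noteq> j \<Longrightarrow> e i * e j = 0"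
  using cpoi unfolding complete_primitive_orthogonal_idempotents_def by blast
lemma e_sum: "(\<Sum>i<n. e i) = 1"
  using cpoi unfolding complete_primitive_orthogonal_idempotents_def by blast

lemma decomp: "a = (\<Sum>j<n. \<Sum>i<n. e j * a * e i)"
proof -
  have "a = (\<Sum>j<n. e j) * a * (\<Sum>i<n. e i)" by (simp add: e_sum)
  also have "\<dots> = (\<Sum>j<n. e j * a * (\<Sum>i<n. e i))"
    by (simp add: sum_distrib_right)
  also have "\<dots> = (\<Sum>j<n. \<Sum>i<n. e j * a * e i)"
    by (simp add: sum_distrib_left)
  finally show ?thesis .
qed

definition inC :: "nat \<Rightarrow> nat \<Rightarrow> 'a \<Rightarrow> bool" where
  "inC j i x \<longleftrightarrow> e j * x = x \<and> x * e i = x"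

lemma inC_mk: "j < n \<Longrightarrow> i < n \<Longrightarrow> inC j i (e j * a * e i)"
  unfolding inC_def by (simp add: mult.assoc[symmetric] e_idem) (simp add: mult.assoc e_idem)

lemma sc_power: "(sc c y)^k = sc (c^k) (y^k)"
proof (induction k)
  case 0 then show ?case by simp
next
  case (Suc k)
  then show ?case by (simp add: sc_mult_left sc_mult_right)
qed

lemma nilp_sc: "nilp y \<Longrightarrow> nilp (sc c y)"
  unfolding nilp_def by (auto simp: sc_power)

lemma U2: assumes "e i * z = z" "t * z = e i" "nilp z" "i < n" shows False
proof -
  have k: "t^Suc k * z^Suc k = e i" for k
  proof (induction k)
    case 0 then show ?case using assms by simp
  next
    case (Suc k)
    have "t^Suc (Suc k) * z^Suc (Suc k) = t^Suc k * (t * z) * z^Suc k"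
      by (simp only: power_Suc2[of t "Suc k"] power_Suc[of z "Suc k"] mult.assoc)
    also have "\<dots> = t^Suc k * z^Suc k" using assms(1,2)
      by (metis mult.assoc power_Suc)
    finally show ?case using Suc by simp
  qed
  obtain m where "z^m = 0" using assms(3) unfolding nilp_def by blast
  hence "z^Suc m = 0" by simp
  with k[of m] e_nz[OF assms(4)] show False by simp
qed

lemma U1: assumes "i < n" "inC i i z" "\<not> nilp z"
  shows "\<exists>w. w * z = e i \<and> e i * w = w"
proof -
  define q where "q = e i"
  have qq: "q * q = q" unfolding q_def using e_idem assms by simp
  have qz: "q * z = z" "z * q = z" using assms(2) unfolding inC_def q_def by auto
  obtain l where nl: "nilp (z - sc l q)" using local_lemma[OF e_prim[OF assms(1)]] qz unfolding q_def by blast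
  have l0: "l \<noteq> 0" using nl assms(3) by auto
  define m where "m = sc (- 1 / l) (z - sc l q)"
  have zm: "z = sc l (q - m)" unfolding m_def using l0
    by (simp add: scale_right_diff_distrib)
  have "nilp m" unfolding m_def by (rule nilp_sc[OF nl])
  then obtain t where t: "t * (1 - m) = 1" using nilp_left_inv by blast
  have mq: "m * q = m" unfolding m_def
    by (simp add: sc_mult_left left_diff_distrib qz qq)
  have "(1 - m) * q = q - m" by (simp add: left_diff_distrib mq)
  hence tq: "t * (q - m) = q" by (metis mult.assoc t mult_1)
  define w where "w = sc (1 / l) (q * t)"
  have "w * z = sc (1/l) (sc l (q * t * (q - m)))" unfolding w_def
    by (simp add: zm sc_mult_left sc_mult_right)
  also have "\<dots> = q" using l0 tq qq by (simp add: mult.assoc)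
  finally have "w * z = q" .
  moreover have "q * w = w" unfolding w_def by (simp add: sc_mult_right mult.assoc[symmetric] qq)
  ultimately show ?thesis unfolding q_def by blast
qed

lemma KR: assumes ij: "i < n" "j < n" and x: "inC j i x"
  and H: "\<And>y. inC i j y \<Longrightarrow> nilp (y * x)"
  shows "x \<in> radical"
  unfolding rad_char
proof
  fix b
  define y where "y = e i * b * e j"
  have "inC i j y" unfolding y_def by (rule inC_mk[OF ij])
  then obtain m where m: "(y * x)^m = 0" using H unfolding nilp_def by blast
  have xbx: "x * b * x = x * y * x"
  proof -
    have "x * b * x = (x * e i) * b * (e j * x)" using x unfolding inC_def by simp
    thus ?thesis unfolding y_def by (simp add: mult.assoc)
  qed
  have pw: "(b * x)^Suc k = b * (x * (y * x)^k)" for k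
  proof (induction k)
    case 0 then show ?case by simp
  next
    case (Suc k)
    have "(b * x)^Suc (Suc k) = b * x * (b * (x * (y * x)^k))" using Suc by (simp only: power_Suc)
    also have "\<dots> = b * ((x * b * x) * (y * x)^k)" by (simp only: mult.assoc)
    also have "\<dots> = b * ((x * y * x) * (y * x)^k)" by (simp only: xbx)
    also have "\<dots> = b * (x * (y * x)^Suc k)" by (simp only: power_Suc mult.assoc)
    finally show ?case .
  qed
  have "(b * x)^Suc m = 0" using pw[of m] m by simp
  hence "nilp (b * x)" unfolding nilp_def by blast
  thus "\<exists>u. u * (1 - b * x) = 1" by (rule nilp_left_inv)
qed

lemma F1: assumes ij: "i < n" "j < n" "i \<noteq> j" and x: "inC j i x"
  shows "x \<in> radical"
proof (rule KR[OF ij(1,2) x])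
  fix y assume y: "inC i j y"
  show "nilp (y * x)"
  proof (rule ccontr)
    assume nn: "\<not> nilp (y * x)"
    have "inC i i (y * x)" using x y unfolding inC_def by (simp add: mult.assoc[symmetric]) (simp add: mult.assoc)
    then obtain w where w: "w * (y * x) = e i" "e i * w = w" using U1[OF ij(1) _ nn] by blast
    define v where "v = w * y"
    define u where "u = x"
    have vu: "v * u = e i" unfolding v_def u_def using w by (simp add: mult.assoc)
    have v: "e i * v = v" "v * e j = v" unfolding v_def using w y unfolding inC_def
      by (simp_all add: mult.assoc[symmetric]) (simp add: mult.assoc)
    have u: "e j * u = u" "u * e i = u" using x unfolding u_def inC_def by auto
    define p where "p = u * v"
    have pp: "p * p = p" unfolding p_def by (metis mult.assoc vu u(2))
    have p0: "p \<noteq> 0"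
    proof
      assume "p = 0"
      have "e i = v * u * (v * u)" using vu e_idem[OF ij(1)] by simp
      also have "\<dots> = v * p * u" unfolding p_def by (simp add: mult.assoc)
      finally show False using \<open>p = 0\<close> e_nz[OF ij(1)] by simp
    qed
    have pj: "e j * p = p" "p * e j = p" unfolding p_def using u v by (simp_all add: mult.assoc[symmetric]) (simp add: mult.assoc)
    define p' where "p' = e j - p"
    have p'p': "p' * p' = p'" unfolding p'_def using pp pj e_idem[OF ij(2)] by (simp add: algebra_simps)
    have pp': "p * p' = 0" "p' * p = 0" unfolding p'_def using pp pj by (simp_all add: algebra_simps)
    have "e j = p + p'" unfolding p'_def by simp
    hence "p' = 0" using e_prim[OF ij(2)] pp p'p' pp' p0 unfolding primitive_idempotent_def idempotent_def by blast
    hence uv: "u * v = e j" using p'_def p_def by simp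
    define A where "A k = {e k * a | a. True}" for k
    have mem: "z \<in> A i \<Longrightarrow> e i * z = z" for z unfolding A_def using e_idem[OF ij(1)] by (auto simp: mult.assoc[symmetric])
    have "bij_betw (\<lambda>z. u * z) (A i) (A j)"
      unfolding bij_betw_def
    proof
      show "inj_on (\<lambda>z. u * z) (A i)"
      proof (rule inj_onI)
        fix z1 z2 assume "z1 \<in> A i" "z2 \<in> A i" "u * z1 = u * z2"
        hence "v * u * z1 = v * u * z2" by (simp add: mult.assoc)
        thus "z1 = z2" using vu mem \<open>z1 \<in> A i\<close> \<open>z2 \<in> A i\<close> by metis
      qed
      show "(\<lambda>z. u * z) ` A i = A j"
      proof
        show "(\<lambda>z. u * z) ` A i \<subseteq> A j"
        proof
          fix w assume "w \<in> (\<lambda>z. u * z) ` A i"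
          then obtain a where "w = u * (e i * a)" unfolding A_def by blast
          hence "w = e j * (u * a)" by (metis mult.assoc u)
          thus "w \<in> A j" unfolding A_def by blast
        qed
        show "A j \<subseteq> (\<lambda>z. u * z) ` A i"
        proof
          fix w assume "w \<in> A j"
          then obtain a where wa: "w = e j * a" unfolding A_def by blast
          have "e j * a = u * (e i * (v * e j * a))"
            by (metis mult.assoc uv v(1) e_idem[OF ij(2)])
          moreover have "e i * (v * e j * a) \<in> A i" unfolding A_def by blast
          ultimately show "w \<in> (\<lambda>z. u * z) ` A i" using wa by blast
        qed
      qed
    qed
    moreover have "\<forall>x\<in>A i. \<forall>y\<in>A i. u * (x + y) = u * x + u * y" by (simp add: distrib_left)
    moreover have "\<forall>x\<in>A i. \<forall>c. u * sc c x = sc c (u * x)" by (simp add: sc_mult_right)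
    moreover have "\<forall>x\<in>A i. \<forall>a. u * (x * a) = u * x * a" by (simp add: mult.assoc)
    ultimately show False using basic ij unfolding basic_algebra_def A_def by blast
  qed
qed

lemma G: assumes i: "i < n" and x: "inC i i x" and nx: "nilp x"
  shows "x \<in> radical"
proof (rule KR[OF i i x])
  fix y assume y: "inC i i y"
  show "nilp (y * x)"
  proof (rule ccontr)
    assume nn: "\<not> nilp (y * x)"
    have "inC i i (y * x)" using x y unfolding inC_def by (simp add: mult.assoc[symmetric]) (simp add: mult.assoc)
    then obtain w where w: "w * (y * x) = e i" using U1[OF i _ nn] by blast
    show False using U2[of i x "w * y"] x w nx i unfolding inC_def by (simp add: mult.assoc)
  qed
qed

end

context alg begin

lemma subspace_pre:
  assumes "subspace V" "\<And>x y. f (x + y) = f x + f y" "\<And>c x. f (sc c x) = sc c (f x)"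
  shows "subspace {z. f z \<in> V}"
proof (rule subspaceI)
  have "f 0 = f (sc 0 0)" by simp
  also have "\<dots> = 0" by (simp only: assms(3)) simp
  finally show "0 \<in> {z. f z \<in> V}" using assms(1) by (simp add: subspace_0)
qed (use assms in \<open>auto simp: subspace_add subspace_scale\<close>)

lemma span_pre:
  assumes "z \<in> span S" "subspace V" "\<And>x y. f (x + y) = f x + f y" "\<And>c x. f (sc c x) = sc c (f x)"
    "\<And>s. s \<in> S \<Longrightarrow> f s \<in> V"
  shows "f z \<in> V"
proof -
  have "span S \<subseteq> {z. f z \<in> V}"
    by (rule span_minimal) (use assms subspace_pre in auto)
  thus ?thesis using assms(1) by auto
qed

end

context alg2 begin

fun Rp :: "nat \<Rightarrow> 'a set" where
  "Rp 0 = radical"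
| "Rp (Suc m) = span {x * y | x y. x \<in> radical \<and> y \<in> Rp m}"

lemma Rp_subspace: "subspace (Rp m)"
  by (cases m) (simp_all add: radical_subspace)

lemma Rp_mult: "x \<in> radical \<Longrightarrow> y \<in> Rp m \<Longrightarrow> x * y \<in> Rp (Suc m)"
  by simp (rule span_base, blast)

lemma Rp_left: "y \<in> Rp m \<Longrightarrow> a * y \<in> Rp m"
proof (induction m arbitrary: y)
  case 0 then show ?case by (simp add: radical_left)
next
  case (Suc m)
  show ?case
  proof (rule span_pre[where f="\<lambda>z. a * z", OF Suc.prems[simplified] Rp_subspace])
    show "a * (x + y) = a * x + a * y" for x y by (simp add: distrib_left)
    show "a * sc c x = sc c (a * x)" for c x by (simp add: sc_mult_right)
    fix s assume "s \<in> {x * y | x y. x \<in> radical \<and> y \<in> Rp m}"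
    then obtain x y where "s = x * y" "x \<in> radical" "y \<in> Rp m" by blast
    thus "a * s \<in> Rp (Suc m)" by (simp only: mult.assoc[symmetric] Rp_mult radical_left)
  qed
qed

lemma Rp_right: "y \<in> Rp m \<Longrightarrow> y * a \<in> Rp m"
proof (induction m arbitrary: y)
  case 0 then show ?case by (simp add: radical_right)
next
  case (Suc m)
  show ?case
  proof (rule span_pre[where f="\<lambda>z. z * a", OF Suc.prems[simplified] Rp_subspace])
    show "(x + y) * a = x * a + y * a" for x y by (simp add: distrib_right)
    show "sc c x * a = sc c (x * a)" for c x by (simp add: sc_mult_left)
    fix s assume "s \<in> {x * y | x y. x \<in> radical \<and> y \<in> Rp m}"
    then obtain x y where "s = x * y" "x \<in> radical" "y \<in> Rp m" by blast
    thus "s * a \<in> Rp (Suc m)" by (simp only: mult.assoc Rp_mult Suc.IH)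
  qed
qed

lemma Rp_mult2: assumes "x \<in> Rp (Suc 0)" "y \<in> Rp m" shows "x * y \<in> Rp (Suc (Suc m))"
proof (rule span_pre[where f="\<lambda>z. z * y", OF assms(1)[simplified] Rp_subspace])
  show "(x + z) * y = x * y + z * y" for x z by (simp add: distrib_right)
  show "sc c x * y = sc c (x * y)" for c x by (simp add: sc_mult_left)
  fix s :: 'a assume "s \<in> {x * y | x y. x \<in> radical \<and> y \<in> radical}"
  then obtain x1 x2 where "s = x1 * x2" "x1 \<in> radical" "x2 \<in> radical" by auto
  thus "s * y \<in> Rp (Suc (Suc m))" using assms(2) by (simp only: mult.assoc Rp_mult)
qed

abbreviation "QQ \<equiv> {(i, j). quiver_arrow sc n e i j}"

lemma claim0: "j < n \<Longrightarrow> l < n \<Longrightarrow> (l, j) \<notin> QQ \<Longrightarrow> y \<in> radical \<Longrightarrow> e j * y * e l \<in> Rp (Suc 0)"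
  unfolding quiver_arrow_def radical_sq_def by auto

lemma split_mid: "e j * (y * z) * e l = (\<Sum>a<n. (e j * y * e a) * (e a * z * e l))"
proof -
  have "y * z = y * (\<Sum>a<n. e a) * z" by (simp add: e_sum)
  also have "\<dots> = (\<Sum>a<n. y * e a * z)" by (simp add: sum_distrib_left sum_distrib_right)
  also have "\<dots> = (\<Sum>a<n. y * (e a * e a) * z)" by (rule sum.cong) (simp_all add: e_idem)
  finally have "e j * (y * z) * e l = e j * (\<Sum>a<n. y * (e a * e a) * z) * e l" by simp
  also have "\<dots> = (\<Sum>a<n. (e j * y * e a) * (e a * z * e l))"
    by (simp add: sum_distrib_left sum_distrib_right mult.assoc)
  finally show ?thesis .
qed

lemma claim: "j < n \<Longrightarrow> l < n \<Longrightarrow> (l, j) \<notin> QQ ^^ Suc m \<Longrightarrow> x \<in> Rp m \<Longrightarrow> e j * x * e l \<in> Rp (Suc m)"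
proof (induction m arbitrary: j l x)
  case 0 then show ?case using claim0 by simp
next
  case (Suc m)
  have x: "x \<in> span {x * y | x y. x \<in> radical \<and> y \<in> Rp m}" using Suc.prems(4) by simp
  show ?case
  proof (rule span_pre[where f="\<lambda>z. e j * z * e l", OF x Rp_subspace])
    show "e j * (x + y) * e l = e j * x * e l + e j * y * e l" for x y by (simp add: algebra_simps)
    show "e j * sc c x * e l = sc c (e j * x * e l)" for c x by (simp add: sc_mult_left sc_mult_right)
    fix s assume "s \<in> {x * y | x y. x \<in> radical \<and> y \<in> Rp m}"
    then obtain y z where s: "s = y * z" "y \<in> radical" "z \<in> Rp m" by blast
    have "(e j * y * e a) * (e a * z * e l) \<in> Rp (Suc (Suc m))" if a: "a < n" for a
    proof (cases "(l, a) \<in> QQ ^^ Suc m")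
      case True
      have "(a, j) \<notin> QQ"
      proof
        assume "(a, j) \<in> QQ"
        hence "(l, j) \<in> QQ ^^ Suc m O QQ" using True by blast
        thus False using Suc.prems(3) by simp
      qed
      hence "e j * y * e a \<in> Rp (Suc 0)" using claim0 Suc.prems(1) a s(2) by blast
      moreover have "e a * z * e l \<in> Rp m" using s(3) by (simp add: Rp_left Rp_right)
      ultimately show ?thesis by (rule Rp_mult2)
    next
      case False
      hence "e a * z * e l \<in> Rp (Suc m)" using Suc.IH a Suc.prems(2) s(3) by blast
      have "e j * y * e a \<in> radical" using s(2) by (simp add: radical_left radical_right)
      thus ?thesis using \<open>e a * z * e l \<in> Rp (Suc m)\<close> by (rule Rp_mult)
    qed
    thus "e j * s * e l \<in> Rp (Suc (Suc m))" unfolding s split_mid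
      by (intro subspace_sum[OF Rp_subspace]) simp
  qed
qed

lemma QQ_bound: "(i, j) \<in> QQ \<Longrightarrow> i < n \<and> j < n" unfolding quiver_arrow_def by auto

lemma no_cycle: "(i, i) \<notin> QQ ^^ Suc m"
  using acyc unfolding quiver_acyclic_def by (metis trancl_power zero_less_Suc)

lemma nopath: assumes "k \<ge> n" "k > 0" shows "(l, j) \<notin> QQ ^^ k"
proof
  assume "(l, j) \<in> QQ ^^ k"
  then obtain f where f: "f 0 = l" "f k = j" "\<forall>i<k. (f i, f (Suc i)) \<in> QQ"
    unfolding relpow_fun_conv by blast
  have kpos: "k > 0" by (rule assms(2))
  have img: "f ` {..k} \<subseteq> {..<n}"
  proof
    fix y assume "y \<in> f ` {..k}"
    then obtain i where i: "i \<le> k" "y = f i" by auto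
    show "y \<in> {..<n}"
    proof (cases "i < k")
      case True then show ?thesis using f(3) QQ_bound i by blast
    next
      case False
      hence "i = Suc (k - 1)" using i kpos by simp
      thus ?thesis using f(3)[rule_format, of "k - 1"] QQ_bound i kpos by auto
    qed
  qed
  have "\<not> inj_on f {..k}"
  proof
    assume "inj_on f {..k}"
    hence "card (f ` {..k}) = Suc k" by (simp add: card_image)
    moreover have "card (f ` {..k}) \<le> n" using card_mono[OF _ img] by simp
    ultimately show False using assms by simp
  qed
  then obtain s0 t0 where st0: "s0 \<le> k" "t0 \<le> k" "s0 \<noteq> t0" "f s0 = f t0"
    unfolding inj_on_def by auto
  define s where "s = min s0 t0"
  define t where "t = max s0 t0"
  have st: "s \<le> k" "t \<le> k" "s < t" "f s = f t"
    using st0 unfolding s_def t_def by (auto simp: min_def max_def)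
  have "(f s, f t) \<in> QQ ^^ (t - s)"
    unfolding relpow_fun_conv
    by (rule exI[of _ "\<lambda>i. f (s + i)"]) (use st f(3) in auto)
  moreover have "t - s = Suc (t - s - 1)" using st by simp
  ultimately have "(f s, f s) \<in> QQ ^^ Suc (t - s - 1)" using st(4) by simp
  thus False using no_cycle by blast
qed

lemma Rp_stable: "Rp n \<subseteq> Rp (Suc n)"
proof
  fix x assume x: "x \<in> Rp n"
  have "x = (\<Sum>j<n. \<Sum>l<n. e j * x * e l)" by (rule decomp)
  also have "\<dots> \<in> Rp (Suc n)"
    by (intro subspace_sum[OF Rp_subspace] claim nopath x) simp_all
  finally show "x \<in> Rp (Suc n)" .
qed

definition Aspan :: "'a set \<Rightarrow> 'a set" where
  "Aspan G = {y. \<exists>a. y = (\<Sum>g\<in>G. a g * g)}"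

lemma nak_rep:
  assumes "finite G" "M \<subseteq> Aspan G" "z \<in> span {x * y | x y. x \<in> radical \<and> y \<in> M}"
  shows "\<exists>\<rho>. (\<forall>g. \<rho> g \<in> radical) \<and> z = (\<Sum>g\<in>G. \<rho> g * g)"
  using assms(3)
proof (induction rule: span_induct_alt)
  case base
  show ?case by (rule exI[of _ "\<lambda>_. 0"]) (simp add: radical_zero)
next
  case (step c s z')
  then obtain x1 y1 where s: "s = x1 * y1" "x1 \<in> radical" "y1 \<in> M" by blast
  obtain a where a: "y1 = (\<Sum>g\<in>G. a g * g)" using s(3) assms(2) unfolding Aspan_def by blast
  obtain \<rho> where \<rho>: "\<forall>g. \<rho> g \<in> radical" "z' = (\<Sum>g\<in>G. \<rho> g * g)" using step.IH by blast
  define \<rho>' where "\<rho>' g = sc c (x1 * a g) + \<rho> g" for g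
  have "sc c s + z' = (\<Sum>g\<in>G. \<rho>' g * g)"
    unfolding \<rho>'_def s a \<rho>(2)
    by (simp add: sum_distrib_left scale_sum_right distrib_right sum.distrib sc_mult_left mult.assoc)
  moreover have "\<forall>g. \<rho>' g \<in> radical" unfolding \<rho>'_def
    using \<rho>(1) s(2) radical_subspace
    by (auto intro!: radical_add radical_right subspace_scale)
  ultimately show ?case by blast
qed

lemma nak_step:
  assumes fin: "finite G" and gG: "g \<notin> G" and sub: "insert g G \<subseteq> M"
    and MA: "M \<subseteq> Aspan (insert g G)"
    and MR: "M \<subseteq> span {x * y | x y. x \<in> radical \<and> y \<in> M}"
  shows "M \<subseteq> Aspan G"
proof
  obtain \<rho> where \<rho>: "\<forall>h. \<rho> h \<in> radical" "g = (\<Sum>h\<in>insert g G. \<rho> h * h)"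
    using nak_rep[OF _ MA, of g] fin sub MR by blast
  hence "g = \<rho> g * g + (\<Sum>h\<in>G. \<rho> h * h)" using fin gG by simp
  hence eq: "(1 - \<rho> g) * g = (\<Sum>h\<in>G. \<rho> h * h)" by (simp add: algebra_simps)
  obtain t where t: "t * (1 - 1 * \<rho> g) = 1" using \<rho>(1) unfolding rad_char by blast
  have gt: "g = (\<Sum>h\<in>G. (t * \<rho> h) * h)"
  proof -
    have "g = t * ((1 - \<rho> g) * g)" using t by (simp add: mult.assoc[symmetric])
    also have "\<dots> = (\<Sum>h\<in>G. (t * \<rho> h) * h)" by (simp add: eq sum_distrib_left mult.assoc)
    finally show ?thesis .
  qed
  fix m assume "m \<in> M"
  then obtain a where "m = (\<Sum>h\<in>insert g G. a h * h)" using MA unfolding Aspan_def by blast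
  hence "m = a g * g + (\<Sum>h\<in>G. a h * h)" using fin gG by simp
  also have "\<dots> = (\<Sum>h\<in>G. (a g * (t * \<rho> h) + a h) * h)"
    by (subst gt) (simp add: sum_distrib_left distrib_right sum.distrib mult.assoc)
  finally have "m = (\<Sum>h\<in>G. (a g * (t * \<rho> h) + a h) * h)" .
  thus "m \<in> Aspan G" unfolding Aspan_def by (intro CollectI exI[of _ "\<lambda>h. a g * (t * \<rho> h) + a h"])
qed

lemma nakayama:
  assumes MS: "subspace M" and MR: "M \<subseteq> span {x * y | x y. x \<in> radical \<and> y \<in> M}"
  shows "M \<subseteq> {0}"
proof -
  have main: "finite G \<Longrightarrow> G \<subseteq> M \<longrightarrow> M \<subseteq> Aspan G \<longrightarrow> M \<subseteq> {0}" for G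
  proof (induction G rule: finite_induct)
    case empty then show ?case by (simp add: Aspan_def)
  next
    case (insert g G)
    show ?case using nak_step[OF insert(1,2) _ _ MR] insert(3) by blast
  qed
  obtain G where G: "G \<subseteq> M" "independent G" "M \<subseteq> span G" using maximal_independent_subset[of M] by blast
  have fG: "finite G" using independent_span_bound[OF SBfin G(2)] SBspan by auto
  have "span G \<subseteq> Aspan G"
  proof
    fix y assume "y \<in> span G"
    thus "y \<in> Aspan G"
    proof (induction rule: span_induct_alt)
      case base then show ?case unfolding Aspan_def by (auto intro!: exI[of _ "\<lambda>_. 0"])
    next
      case (step c x y)
      then obtain a where a: "y = (\<Sum>g\<in>G. a g * g)" unfolding Aspan_def by blast
      define b where "b g = (if g = x then sc c 1 else 0) + a g" for g
      have "(\<Sum>g\<in>G. b g * g) = (\<Sum>g\<in>G. (if g = x then sc c 1 * x else 0)) + y"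
        unfolding b_def a by (simp add: distrib_right sum.distrib if_distrib[of "\<lambda>u. u * _"] cong: if_cong)
      also have "\<dots> = sc c x + y" using step(1) fG by (simp add: sum.delta' sc_1[symmetric])
      finally have "sc c x + y = (\<Sum>g\<in>G. b g * g)" by simp
      thus ?case unfolding Aspan_def by (intro CollectI exI[of _ b])
    qed
  qed
  thus ?thesis using main[OF fG] G by blast
qed

lemma Rp_zero: "Rp n \<subseteq> {0}"
  by (rule nakayama[OF Rp_subspace]) (use Rp_stable in simp)

lemma F2: assumes "i < n" "x \<in> radical" "inC i i x" shows "x = 0"
proof -
  have "x \<in> Rp m" for m
  proof (induction m)
    case 0 then show ?case using assms by simp
  next
    case (Suc m)
    have "e i * x * e i \<in> Rp (Suc m)" by (rule claim[OF assms(1) assms(1) no_cycle Suc])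
    thus ?case using assms(3) unfolding inC_def by simp
  qed
  thus ?thesis using Rp_zero by blast
qed

lemma diag_corner: assumes "i < n" "inC i i z" shows "\<exists>c. z = sc c (e i)"
proof -
  have qz: "e i * z = z" "z * e i = z" using assms(2) unfolding inC_def by auto
  obtain l where nl: "nilp (z - sc l (e i))" using local_lemma[OF e_prim[OF assms(1)] qz] by blast
  have "inC i i (z - sc l (e i))" using qz e_idem[OF assms(1)] unfolding inC_def
    by (simp add: algebra_simps sc_mult_left sc_mult_right)
  hence "z - sc l (e i) \<in> radical" using G[OF assms(1) _ nl] by blast
  hence "z - sc l (e i) = 0" using F2[OF assms(1)] \<open>inC i i (z - sc l (e i))\<close> by blast
  thus ?thesis by auto
qed

end

context alg begin

definition lin :: "('a \<Rightarrow> 'a) \<Rightarrow> bool" where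
  "lin d \<longleftrightarrow> (\<forall>x y. d (x + y) = d x + d y) \<and> (\<forall>c x. d (sc c x) = sc c (d x))"

lemma linear_lin: "Vector_Spaces.linear sc sc d \<Longrightarrow> lin d"
  unfolding lin_def using Vector_Spaces.linear_iff[of sc sc d] by blast

lemma lin_add: "lin d \<Longrightarrow> d (x + y) = d x + d y" unfolding lin_def by blast
lemma lin_sc: "lin d \<Longrightarrow> d (sc c x) = sc c (d x)" unfolding lin_def by blast
lemma lin_0: "lin d \<Longrightarrow> d 0 = 0" using lin_sc[of d 0 0] by simp
lemma lin_neg: "lin d \<Longrightarrow> d (- x) = - d x" using lin_sc[of d "-1" x] by simp
lemma lin_diff: "lin d \<Longrightarrow> d (x - y) = d x - d y"
  using lin_add[of d x "- y"] lin_neg[of d y] by simp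
lemma lin_sum: "lin d \<Longrightarrow> d (sum f A) = (\<Sum>a\<in>A. d (f a))"
  by (induction A rule: infinite_finite_induct) (simp_all add: lin_0 lin_add)

lemma indep_finite: "independent B \<Longrightarrow> finite B"
  using independent_span_bound[OF SBfin, of B] SBspan by auto

definition ev :: "('a \<Rightarrow> 'a) \<Rightarrow> 'a \<Rightarrow> 'k" where "ev d b = (SOME c. d b = sc c b)"

lemma ev: "diagonal_wrt sc d B \<Longrightarrow> b \<in> B \<Longrightarrow> d b = sc (ev d b) b"
  unfolding diagonal_wrt_def ev_def by (metis (mono_tags) someI_ex)

lemma T_sum:
  assumes "lin d" "diagonal_wrt sc d B" "finite B"
  shows "d (\<Sum>b\<in>B. sc (c b) b) - sc l (\<Sum>b\<in>B. sc (c b) b) = (\<Sum>b\<in>B. sc (c b * (ev d b - l)) b)"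
proof -
  have "d (\<Sum>b\<in>B. sc (c b) b) = (\<Sum>b\<in>B. sc (c b * ev d b) b)"
    using assms by (simp add: lin_sum lin_sc ev mult.commute)
  thus ?thesis by (simp add: scale_sum_right sum_subtractf[symmetric] algebra_simps)
qed

lemma sq_kernel:
  assumes d: "lin d" and B: "is_vs_basis sc B" and dg: "diagonal_wrt sc d B"
  and T2: "d (d w - sc l w) - sc l (d w - sc l w) = 0"
  shows "d w - sc l w = 0"
proof -
  have ind: "independent B" and sp: "span B = UNIV" using B unfolding is_vs_basis_def by auto
  have fB: "finite B" by (rule indep_finite[OF ind])
  obtain c where w: "w = (\<Sum>b\<in>B. sc (c b) b)" using sp span_finite[OF fB] by blast
  have T1: "d w - sc l w = (\<Sum>b\<in>B. sc (c b * (ev d b - l)) b)" unfolding w by (rule T_sum[OF d dg fB])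
  have "d (d w - sc l w) - sc l (d w - sc l w) = (\<Sum>b\<in>B. sc (c b * (ev d b - l) * (ev d b - l)) b)"
    unfolding T1 by (rule T_sum[OF d dg fB])
  hence z: "(\<Sum>b\<in>B. sc (c b * (ev d b - l) * (ev d b - l)) b) = 0" using T2 by simp
  have "c b * (ev d b - l) * (ev d b - l) = 0" if "b \<in> B" for b
    using independentD[OF ind fB subset_refl z that] .
  hence "\<forall>b\<in>B. c b * (ev d b - l) * (ev d b - l) = 0" by blast
  hence "\<forall>b\<in>B. c b * (ev d b - l) = 0" by auto
  thus ?thesis unfolding T1 by (intro sum.neutral) auto
qed

lemma DEC:
  assumes "finite L" "subspace W" "lin d" "\<And>w. w \<in> W \<Longrightarrow> d w \<in> W"
  shows "(\<forall>l\<in>L. d (u l) = sc l (u l)) \<Longrightarrow> (\<Sum>l\<in>L. u l) \<in> W \<Longrightarrow> \<forall>l\<in>L. u l \<in> W"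
  using assms(1)
proof (induction L arbitrary: u rule: finite_induct)
  case empty then show ?case by simp
next
  case (insert m L)
  define u' where "u' l = sc (l - m) (u l)" for l
  have s: "u m + (\<Sum>l\<in>L. u l) \<in> W" using insert by simp
  have "d (u m + (\<Sum>l\<in>L. u l)) - sc m (u m + (\<Sum>l\<in>L. u l)) \<in> W"
    using s assms(2,4) by (simp add: subspace_diff subspace_scale)
  moreover have "d (u m + (\<Sum>l\<in>L. u l)) - sc m (u m + (\<Sum>l\<in>L. u l)) = (\<Sum>l\<in>L. u' l)"
    using insert.prems(1) assms(3) unfolding u'_def
    by (simp add: lin_add lin_sum scale_sum_right scale_left_diff_distrib sum_subtractf algebra_simps)
  ultimately have "(\<Sum>l\<in>L. u' l) \<in> W" by simp
  moreover have "\<forall>l\<in>L. d (u' l) = sc l (u' l)" using insert.prems(1) assms(3) unfolding u'_def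
    by (simp add: lin_sc mult.commute)
  ultimately have u'W: "\<forall>l\<in>L. u' l \<in> W" using insert.IH by blast
  have uL: "\<forall>l\<in>L. u l \<in> W"
  proof
    fix l assume "l \<in> L"
    hence "l - m \<noteq> 0" using insert.hyps(2) by auto
    hence "u l = sc (1 / (l - m)) (u' l)" unfolding u'_def by simp
    thus "u l \<in> W" using u'W \<open>l \<in> L\<close> assms(2) by (simp add: subspace_scale)
  qed
  hence "(\<Sum>l\<in>L. u l) \<in> W" using subspace_sum[OF assms(2), of L u] by blast
  hence "u m \<in> W" using s assms(2) by (metis add_diff_cancel_right' subspace_diff)
  thus ?case using uL by simp
qed

lemma ED:
  assumes d: "lin d" and B: "is_vs_basis sc B" and dg: "diagonal_wrt sc d B"
  and W: "subspace W" "\<And>w. w \<in> W \<Longrightarrow> d w \<in> W" and w: "w \<in> W"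
  shows "\<exists>L u. finite L \<and> w = (\<Sum>l\<in>L. u l) \<and> (\<forall>l\<in>L. d (u l) = sc l (u l) \<and> u l \<in> W)"
proof -
  have ind: "independent B" and sp: "span B = UNIV" using B unfolding is_vs_basis_def by auto
  have fB: "finite B" by (rule indep_finite[OF ind])
  obtain c where wc: "w = (\<Sum>b\<in>B. sc (c b) b)" using sp span_finite[OF fB] by blast
  define L where "L = ev d ` B"
  define u where "u l = (\<Sum>b\<in>{b. b \<in> B \<and> ev d b = l}. sc (c b) b)" for l
  have fL: "finite L" unfolding L_def using fB by simp
  have wu: "w = (\<Sum>l\<in>L. u l)" unfolding wc u_def L_def by (rule sum.image_gen[OF fB])
  have eig: "\<forall>l\<in>L. d (u l) = sc l (u l)"
    unfolding u_def using d dg by (simp add: lin_sum lin_sc ev scale_sum_right mult.commute)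
  have sW: "(\<Sum>l\<in>L. u l) \<in> W" by (subst wu[symmetric]) (rule w)
  have "\<forall>l\<in>L. u l \<in> W" by (rule DEC[OF fL W(1) d W(2) eig sW])
  thus ?thesis using fL wu eig by blast
qed

lemma fdvs: "\<exists>Bs. finite_dimensional_vector_space sc Bs"
proof -
  obtain Bs where "Bs \<subseteq> UNIV" "independent Bs" "UNIV \<subseteq> span Bs" using maximal_independent_subset[of UNIV] by blast
  moreover have "finite Bs" using indep_finite calculation by blast
  ultimately show ?thesis
    by (intro exI[of _ Bs]) (unfold_locales, auto)
qed

lemma SD:
  assumes lins: "\<And>d. d \<in> Fam \<Longrightarrow> lin d"
  and diag: "\<And>d. d \<in> Fam \<Longrightarrow> \<exists>B. is_vs_basis sc B \<and> diagonal_wrt sc d B"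
  and comm: "\<And>d d' x. d \<in> Fam \<Longrightarrow> d' \<in> Fam \<Longrightarrow> d (d' x) = d' (d x)"
  shows "subspace W \<Longrightarrow> (\<And>d w. d \<in> Fam \<Longrightarrow> w \<in> W \<Longrightarrow> d w \<in> W) \<Longrightarrow>
     W \<subseteq> span ({v. \<forall>d\<in>Fam. \<exists>c. d v = sc c v} \<inter> W)"
proof (induction W rule: measure_induct_rule[where f=dim])
  case (less W)
  define C where "C = {v. \<forall>d\<in>Fam. \<exists>c. d v = sc c v}"
  obtain Bs where "finite_dimensional_vector_space sc Bs" using fdvs by blast
  then interpret fd: finite_dimensional_vector_space sc Bs .
  show ?case
  proof (cases "\<forall>d\<in>Fam. \<exists>c. \<forall>w\<in>W. d w = sc c w")
    case True
    hence "W \<subseteq> C \<inter> W" unfolding C_def by blast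
    thus ?thesis unfolding C_def[symmetric] using span_superset by blast
  next
    case False
    then obtain d where dF: "d \<in> Fam" and ns: "\<forall>c. \<exists>w\<in>W. d w \<noteq> sc c w" by blast
    obtain B where B: "is_vs_basis sc B" "diagonal_wrt sc d B" using diag[OF dF] by blast
    define E where "E c = {w \<in> W. d w = sc c w}" for c
    have Esub: "subspace (E c)" for c
    proof -
      have "subspace {w. d w - sc c w \<in> {0}}"
        by (rule subspace_pre) (use lins[OF dF] in \<open>simp_all add: lin_add lin_sc algebra_simps\<close>)
      hence "subspace (W \<inter> {w. d w - sc c w \<in> {0}})" using less.prems(1) by (rule subspace_inter[rotated])
      moreover have "W \<inter> {w. d w - sc c w \<in> {0}} = E c" unfolding E_def by auto
      ultimately show ?thesis by simp
    qed
    have Einv: "g \<in> Fam \<Longrightarrow> w \<in> E c \<Longrightarrow> g w \<in> E c" for g w c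
      unfolding E_def using less.prems(2) comm[OF dF] lins by (auto simp: lin_sc)
    have Edim: "dim (E c) < dim W" for c
    proof -
      have "E c \<subset> W" using ns unfolding E_def by blast
      moreover have s1: "span (E c) = E c" using Esub[of c] by (metis span_eq_iff)
      moreover have s2: "span W = W" using less.prems(1) by (metis span_eq_iff)
      ultimately have "span (E c) \<subset> span W" by (simp only: s1 s2)
      thus ?thesis by (rule fd.dim_psubset)
    qed
    have Espan: "E c \<subseteq> span (C \<inter> W)" for c
    proof -
      have "E c \<subseteq> span (C \<inter> E c)" unfolding C_def
        by (rule less.IH[OF Edim Esub]) (rule Einv)
      also have "\<dots> \<subseteq> span (C \<inter> W)" by (rule span_mono) (auto simp: E_def)
      finally show ?thesis .
    qed
    show ?thesis unfolding C_def[symmetric]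
    proof
      fix w assume w: "w \<in> W"
      obtain L u where Lu: "finite L" "w = (\<Sum>l\<in>L. u l)" "\<forall>l\<in>L. d (u l) = sc l (u l) \<and> u l \<in> W"
        using ED[OF lins[OF dF] B less.prems(1) less.prems(2)[OF dF] w] by blast
      have "\<forall>l\<in>L. u l \<in> E l" using Lu(3) unfolding E_def by auto
      hence "\<forall>l\<in>L. u l \<in> span (C \<inter> W)" using Espan by blast
      thus "w \<in> span (C \<inter> W)" unfolding Lu(2) by (simp add: span_sum)
    qed
  qed
qed

end

context alg2 begin

definition dl :: "'a \<Rightarrow> 'a \<Rightarrow> 'a" where "dl x a = x * a - a * x"

lemma Der0D:
  assumes "d \<in> Der0 sc n e"
  shows "lin d" "d (a * b) = d a * b + a * d b" "i < n \<Longrightarrow> d (e i) = 0"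
  using assms unfolding Der0_def by (auto intro: linear_lin)

lemma der_corner: assumes "d \<in> Der0 sc n e" "i < n" "j < n"
  shows "d (e j * a * e i) = e j * d a * e i"
  using Der0D[OF assms(1)] assms(2,3) by (simp add: distrib_right)

lemma Esub_span: "Esub sc n e = span (e ` {..<n})" unfolding Esub_def by simp

lemma e_comm: "l < n \<Longrightarrow> j < n \<Longrightarrow> e l * e j = e j * e l"
  by (cases "l = j") (simp_all add: e_orth)

lemma Esub_comm_e: assumes "x \<in> Esub sc n e" "j < n" shows "x * e j = e j * x"
proof -
  have "x * e j - e j * x \<in> {0}"
  proof (rule span_pre[where f="\<lambda>z. z * e j - e j * z", OF assms(1)[unfolded Esub_span]])
    show "subspace {0}" by simp
    show "(x + y) * e j - e j * (x + y) = (x * e j - e j * x) + (y * e j - e j * y)" for x y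
      by (simp add: distrib_left distrib_right)
    show "sc c x * e j - e j * sc c x = sc c (x * e j - e j * x)" for c x
      by (simp add: sc_mult_left sc_mult_right scale_right_diff_distrib)
    fix s assume "s \<in> e ` {..<n}"
    then obtain l where "l < n" "s = e l" by auto
    thus "s * e j - e j * s \<in> {0}" using e_comm assms(2) by simp
  qed
  thus ?thesis by simp
qed

lemma Esub_comm: assumes "x \<in> Esub sc n e" "y \<in> Esub sc n e" shows "x * y = y * x"
proof -
  have "x * y - y * x \<in> {0}"
  proof (rule span_pre[where f="\<lambda>z. z * y - y * z", OF assms(1)[unfolded Esub_span]])
    show "subspace {0}" by simp
    show "(x + z) * y - y * (x + z) = (x * y - y * x) + (z * y - y * z)" for x z
      by (simp add: distrib_left distrib_right)
    show "sc c x * y - y * sc c x = sc c (x * y - y * x)" for c x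
      by (simp add: sc_mult_left sc_mult_right scale_right_diff_distrib)
    fix s assume "s \<in> e ` {..<n}"
    then obtain l where "l < n" "s = e l" by auto
    thus "s * y - y * s \<in> {0}" using Esub_comm_e[OF assms(2)] by simp
  qed
  thus ?thesis by simp
qed

lemma der_Esub: assumes "d \<in> Der0 sc n e" "x \<in> Esub sc n e" shows "d x = 0"
proof -
  have "d x \<in> {0}"
    by (rule span_pre[where f=d, OF assms(2)[unfolded Esub_span]])
       (use Der0D[OF assms(1)] in \<open>auto simp: lin_add lin_sc\<close>)
  thus ?thesis by simp
qed

lemma der_dl: assumes "d \<in> Der0 sc n e" "y \<in> Esub sc n e" shows "d (dl y a) = dl y (d a)"
  using Der0D[OF assms(1)] der_Esub[OF assms] unfolding dl_def by (simp add: lin_diff)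

lemma dl_dl: assumes "x \<in> Esub sc n e" "y \<in> Esub sc n e" shows "dl x (dl y a) = dl y (dl x a)"
proof -
  have xy: "x * y = y * x" by (rule Esub_comm[OF assms])
  have h1: "x * (y * a) = y * (x * a)" by (metis mult.assoc xy)
  have h2: "a * (y * x) = a * (x * y)" by (simp add: xy)
  show ?thesis unfolding dl_def by (simp add: algebra_simps h1 h2)
qed

lemma dl_add: "dl x (a + b) = dl x a + dl x b" unfolding dl_def by (simp add: algebra_simps)

lemma comm_shift:
  assumes d1: "d1 \<in> Der0 sc n e" and d1': "d1' \<in> Der0 sc n e"
  and x: "x \<in> Esub sc n e" and y: "y \<in> Esub sc n e"
  and d0: "\<And>a. d0 a = d1 a + dl x a" and d0': "\<And>a. d0' a = d1' a + dl y a"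
  shows "d0 (d0' a) - d0' (d0 a) = d1 (d1' a) - d1' (d1 a)"
proof -
  have l1: "lin d1" and l2: "lin d1'" using Der0D d1 d1' by auto
  have "d0 (d0' a) = d1 (d1' a) + dl y (d1 a) + dl x (d1' a) + dl x (dl y a)"
    by (simp add: d0 d0' lin_add[OF l1] der_dl[OF d1 y] dl_add)
  moreover have "d0' (d0 a) = d1' (d1 a) + dl x (d1' a) + dl y (d1 a) + dl y (dl x a)"
    by (simp add: d0 d0' lin_add[OF l2] der_dl[OF d1' x] dl_add)
  ultimately show ?thesis using dl_dl[OF x y, of a] by (simp add: algebra_simps)
qed

lemma Int0_iff: "h \<in> Int0 sc n e \<longleftrightarrow> (\<exists>x\<in>Esub sc n e. \<forall>a. h a = dl x a)"
  unfolding Int0_def dl_def by (auto simp: fun_eq_iff)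

lemma Esub_diff: "x \<in> Esub sc n e \<Longrightarrow> y \<in> Esub sc n e \<Longrightarrow> x - y \<in> Esub sc n e"
  unfolding Esub_span by (rule span_diff)
lemma Esub_zero: "0 \<in> Esub sc n e"
  unfolding Esub_span by (rule span_zero)

lemma HH1_elem: assumes "f \<in> HH1 sc n e"
  shows "\<exists>g\<in>Der0 sc n e. f = {d. d \<in> Der0 sc n e \<and> (\<lambda>a. g a - d a) \<in> Int0 sc n e}"
proof -
  obtain g where g: "g \<in> Der0 sc n e" "f = HH1_rel sc n e `` {g}"
    using assms unfolding HH1_def by (elim quotientE) blast
  have "HH1_rel sc n e `` {g} = {d. d \<in> Der0 sc n e \<and> (\<lambda>a. g a - d a) \<in> Int0 sc n e}"
    using g(1) unfolding HH1_rel_def by blast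
  thus ?thesis using g by blast
qed

lemma class_rel:
  assumes "f \<in> HH1 sc n e" "d1 \<in> f" "d2 \<in> f"
  shows "d1 \<in> Der0 sc n e" "\<exists>x\<in>Esub sc n e. \<forall>a. d1 a = d2 a + dl x a"
proof -
  obtain g where g: "g \<in> Der0 sc n e" "f = {d. d \<in> Der0 sc n e \<and> (\<lambda>a. g a - d a) \<in> Int0 sc n e}"
    using HH1_elem[OF assms(1)] by blast
  show "d1 \<in> Der0 sc n e" using assms(2) g(2) by auto
  have "(\<lambda>a. g a - d1 a) \<in> Int0 sc n e" using assms(2) g(2) by blast
  then obtain x1 where x1: "x1 \<in> Esub sc n e" "\<forall>a. g a - d1 a = dl x1 a" unfolding Int0_iff by blast
  have "(\<lambda>a. g a - d2 a) \<in> Int0 sc n e" using assms(3) g(2) by blast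
  then obtain x2 where x2: "x2 \<in> Esub sc n e" "\<forall>a. g a - d2 a = dl x2 a" unfolding Int0_iff by blast
  have "\<forall>a. d1 a = d2 a + dl (x2 - x1) a"
  proof
    fix a
    have e1: "dl x1 a = g a - d1 a" using x1(2) by simp
    have e2: "dl x2 a = g a - d2 a" using x2(2) by simp
    have "dl (x2 - x1) a = dl x2 a - dl x1 a" unfolding dl_def by (simp add: algebra_simps)
    thus "d1 a = d2 a + dl (x2 - x1) a" by (simp add: e1 e2)
  qed
  thus "\<exists>x\<in>Esub sc n e. \<forall>a. d1 a = d2 a + dl x a" using Esub_diff[OF x2(1) x1(1)] by blast
qed

lemma class_ne: assumes "f \<in> HH1 sc n e" shows "\<exists>d. d \<in> f"
proof -
  obtain g where g: "g \<in> Der0 sc n e" "f = {d. d \<in> Der0 sc n e \<and> (\<lambda>a. g a - d a) \<in> Int0 sc n e}"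
    using HH1_elem[OF assms(1)] by blast
  have "(\<lambda>a. g a - g a) \<in> Int0 sc n e" unfolding Int0_iff dl_def using Esub_zero by (intro bexI[of _ 0]) auto
  thus ?thesis using g by blast
qed

lemma some_in: "f \<in> HH1 sc n e \<Longrightarrow> (SOME d. d \<in> f) \<in> f"
  using class_ne by (metis someI_ex)

lemma bracket_unfold: "HH1_bracket sc n e f g =
   HH1_class sc n e (\<lambda>a. (SOME d. d \<in> f) ((SOME d. d \<in> g) a) - (SOME d. d \<in> g) ((SOME d. d \<in> f) a))"
  unfolding HH1_bracket_def Let_def by simp

lemma forward_bracket:
  assumes f: "f \<in> HH1 sc n e" and g: "g \<in> HH1 sc n e" and d1: "d1 \<in> f" and d1': "d1' \<in> g"
  and cm: "\<And>a. d1 (d1' a) = d1' (d1 a)"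
  shows "HH1_bracket sc n e f g = HH1_zero sc n e"
proof -
  define d0 where "d0 = (SOME d. d \<in> f)"
  define d0' where "d0' = (SOME d. d \<in> g)"
  have "d0 \<in> f" "d0' \<in> g" unfolding d0_def d0'_def using some_in f g by auto
  obtain x where x: "x \<in> Esub sc n e" "\<forall>a. d0 a = d1 a + dl x a" using class_rel(2)[OF f \<open>d0 \<in> f\<close> d1] by blast
  obtain y where y: "y \<in> Esub sc n e" "\<forall>a. d0' a = d1' a + dl y a" using class_rel(2)[OF g \<open>d0' \<in> g\<close> d1'] by blast
  have "(\<lambda>a. d0 (d0' a) - d0' (d0 a)) = (\<lambda>_. 0)"
  proof
    fix a
    show "d0 (d0' a) - d0' (d0 a) = 0"
      using comm_shift[OF class_rel(1)[OF f d1 d1] class_rel(1)[OF g d1' d1'] x(1) y(1), of d0 d0' a] x y cm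
      by simp
  qed
  thus ?thesis unfolding bracket_unfold HH1_zero_def d0_def d0'_def by simp
qed

lemma zero_Der0: "(\<lambda>_. 0) \<in> Der0 sc n e"
  unfolding Der0_def by (simp add: Vector_Spaces.linear_iff vector_space_axioms)

lemma bracket_zero_Int:
  assumes f: "f \<in> HH1 sc n e" and g: "g \<in> HH1 sc n e"
  and br: "HH1_bracket sc n e f g = HH1_zero sc n e"
  shows "\<exists>x\<in>Esub sc n e. \<forall>a. (SOME d. d \<in> f) ((SOME d. d \<in> g) a) - (SOME d. d \<in> g) ((SOME d. d \<in> f) a) = dl x a"
proof -
  define c where "c = (\<lambda>a. (SOME d. d \<in> f) ((SOME d. d \<in> g) a) - (SOME d. d \<in> g) ((SOME d. d \<in> f) a))"
  have "(\<lambda>_. 0) \<in> HH1_zero sc n e"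
    unfolding HH1_zero_def HH1_class_def HH1_rel_def Int0_iff dl_def
    using zero_Der0 Esub_zero by (auto intro!: bexI[of _ 0])
  hence "(\<lambda>_. 0) \<in> HH1_class sc n e c" using br unfolding bracket_unfold c_def by simp
  hence "(\<lambda>a. c a - 0) \<in> Int0 sc n e" unfolding HH1_class_def HH1_rel_def by auto
  thus ?thesis unfolding Int0_iff c_def by simp
qed

lemma diag_commute:
  assumes "lin d1" "lin d2" "diagonal_wrt sc d1 B" "diagonal_wrt sc d2 B" "span B = UNIV"
  shows "d1 (d2 a) = d2 (d1 a)"
proof -
  have "a \<in> span B" using assms(5) by simp
  have "d1 (d2 a) - d2 (d1 a) \<in> {0}"
  proof (rule span_pre[where f="\<lambda>z. d1 (d2 z) - d2 (d1 z)", OF \<open>a \<in> span B\<close>])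
    show "subspace {0}" by simp
    show "d1 (d2 (x + y)) - d2 (d1 (x + y)) = d1 (d2 x) - d2 (d1 x) + (d1 (d2 y) - d2 (d1 y))" for x y
      using assms(1,2) by (simp add: lin_add algebra_simps)
    show "d1 (d2 (sc c x)) - d2 (d1 (sc c x)) = sc c (d1 (d2 x) - d2 (d1 x))" for c x
      using assms(1,2) by (simp add: lin_sc scale_right_diff_distrib)
    fix b assume "b \<in> B"
    then obtain c1 c2 where "d1 b = sc c1 b" "d2 b = sc c2 b" using assms(3,4) unfolding diagonal_wrt_def by blast
    thus "d1 (d2 b) - d2 (d1 b) \<in> {0}" using assms(1,2) by (simp add: lin_sc mult.commute)
  qed
  thus ?thesis by simp
qed

end

context alg2 begin

lemma comm_corner:
  assumes d: "d \<in> Der0 sc n e" and d': "d' \<in> Der0 sc n e" and dg: "diagonalizable_map sc d"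
  and x: "x \<in> Esub sc n e" and br: "\<And>a. d (d' a) - d' (d a) = dl x a"
  and ij: "i < n" "j < n"
  shows "d (d' (e j * a * e i)) = d' (d (e j * a * e i))"
proof -
  have ld: "lin d" and ld': "lin d'" using Der0D d d' by auto
  obtain al where al: "e j * x * e j = sc al (e j)" using diag_corner[OF ij(2) inC_mk[OF ij(2) ij(2)]] by blast
  obtain be where be: "e i * x * e i = sc be (e i)" using diag_corner[OF ij(1) inC_mk[OF ij(1) ij(1)]] by blast
  have cj: "x * e j = e j * x" by (rule Esub_comm_e[OF x ij(2)])
  have ci: "x * e i = e i * x" by (rule Esub_comm_e[OF x ij(1)])
  have "x * e j = x * (e j * e j)" by (simp add: e_idem[OF ij(2)])
  also have "\<dots> = (x * e j) * e j" by (simp only: mult.assoc)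
  also have "\<dots> = e j * x * e j" by (simp only: cj)
  finally have xj: "x * e j = e j * x * e j" .
  have "e i * x = (e i * e i) * x" by (simp add: e_idem[OF ij(1)])
  also have "\<dots> = e i * (e i * x)" by (simp only: mult.assoc)
  also have "\<dots> = e i * (x * e i)" by (simp only: ci)
  also have "\<dots> = e i * x * e i" by (simp only: mult.assoc)
  finally have xi: "e i * x = e i * x * e i" .
  have xv: "x * (e j * b * e i) = sc al (e j * b * e i)" for b
  proof -
    have "x * (e j * b * e i) = (x * e j) * b * e i" by (simp add: mult.assoc)
    also have "\<dots> = sc al (e j * b * e i)" by (simp add: xj al sc_mult_left)
    finally show ?thesis .
  qed
  have vx: "(e j * b * e i) * x = sc be (e j * b * e i)" for b
  proof -
    have "(e j * b * e i) * x = e j * b * (e i * x)" by (simp add: mult.assoc)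
    also have "\<dots> = e j * b * (e i * x * e i)" by (simp only: xi[symmetric])
    also have "\<dots> = e j * b * sc be (e i)" by (simp only: be)
    also have "\<dots> = sc be (e j * b * e i)" by (simp add: sc_mult_right)
    finally show ?thesis .
  qed
  define mu where "mu = al - be"
  have brV: "d (d' (e j * b * e i)) - d' (d (e j * b * e i)) = sc mu (e j * b * e i)" for b
    unfolding br dl_def xv vx mu_def by (simp add: scale_left_diff_distrib)
  show ?thesis
  proof (cases "mu = 0")
    case True
    then show ?thesis using brV[of a] by simp
  next
    case False
    obtain B where B: "is_vs_basis sc B" "diagonal_wrt sc d B" using dg unfolding diagonalizable_map_def by blast
    have zero: "e j * b * e i = 0" if b: "b \<in> B" for b
    proof (rule ccontr)
      assume nz: "e j * b * e i \<noteq> 0"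
      define v0 where "v0 = e j * b * e i"
      define l where "l = ev d b"
      have dv0: "d v0 = sc l v0" unfolding v0_def l_def
        using der_corner[OF d ij] ev[OF B(2) b] by (simp add: sc_mult_left sc_mult_right)
      define w where "w = d' v0"
      have Tw: "d w - sc l w = sc mu v0"
      proof -
        have "d w = d' (d v0) + sc mu v0" using brV[of b] unfolding w_def v0_def by (simp add: algebra_simps)
        thus ?thesis using dv0 ld' by (simp add: lin_sc w_def)
      qed
      have "d (d w - sc l w) - sc l (d w - sc l w) = 0"
        unfolding Tw using ld dv0 by (simp add: lin_sc)
      hence "d w - sc l w = 0" by (rule sq_kernel[OF ld B])
      hence "sc mu v0 = 0" using Tw by simp
      thus False using False nz unfolding v0_def by simp
    qed
    have "a \<in> span B" using B(1) unfolding is_vs_basis_def by simp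
    have "e j * a * e i \<in> {0}"
    proof (rule span_pre[where f="\<lambda>z. e j * z * e i", OF \<open>a \<in> span B\<close>])
      show "subspace {0}" by simp
      show "e j * (x + y) * e i = e j * x * e i + e j * y * e i" for x y by (simp add: algebra_simps)
      show "e j * sc c x * e i = sc c (e j * x * e i)" for c x by (simp add: sc_mult_left sc_mult_right)
      fix b assume "b \<in> B" thus "e j * b * e i \<in> {0}" using zero by simp
    qed
    thus ?thesis using ld ld' by (simp add: lin_0)
  qed
qed

lemma comm_all:
  assumes d: "d \<in> Der0 sc n e" and d': "d' \<in> Der0 sc n e" and dg: "diagonalizable_map sc d"
  and x: "x \<in> Esub sc n e" and br: "\<And>a. d (d' a) - d' (d a) = dl x a"
  shows "d (d' a) = d' (d a)"
proof -
  have ld: "lin d" and ld': "lin d'" using Der0D d d' by auto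
  have "d (d' a) = d (d' (\<Sum>j<n. \<Sum>i<n. e j * a * e i))" by (subst decomp[of a]) simp
  also have "\<dots> = (\<Sum>j<n. \<Sum>i<n. d (d' (e j * a * e i)))" by (simp add: lin_sum[OF ld] lin_sum[OF ld'])
  also have "\<dots> = (\<Sum>j<n. \<Sum>i<n. d' (d (e j * a * e i)))"
    by (intro sum.cong refl) (simp add: comm_corner[OF d d' dg x br])
  also have "\<dots> = d' (d (\<Sum>j<n. \<Sum>i<n. e j * a * e i))" by (simp add: lin_sum[OF ld] lin_sum[OF ld'])
  also have "\<dots> = d' (d a)" by (subst decomp[of a]) simp
  finally show ?thesis .
qed

lemma e_inj: assumes "l < n" "l' < n" "e l = e l'" shows "l = l'"
proof (rule ccontr)
  assume "l \<noteq> l'"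
  have "e l = e l * e l" using e_idem assms(1) by simp
  also have "\<dots> = e l * e l'" using assms(3) by simp
  also have "\<dots> = 0" using e_orth assms(1,2) \<open>l \<noteq> l'\<close> by simp
  finally show False using e_nz assms(1) by simp
qed

lemma Pb: assumes "j < n" "i < n" "j' < n" "i' < n"
  shows "e j * (e j' * a * e i') * e i = (if j = j' \<and> i = i' then e j' * a * e i' else 0)"
proof -
  have "e j * (e j' * a * e i') * e i = (e j * e j') * a * (e i' * e i)" by (simp add: mult.assoc)
  thus ?thesis using assms by (auto simp: e_idem e_orth)
qed

lemma Pe: assumes "j < n" "i < n" "l < n"
  shows "e j * e l * e i = (if j = l \<and> i = l then e l else 0)"
proof (cases "j = l")
  case True
  hence "e j * e l * e i = e l * e i" using e_idem assms by simp
  thus ?thesis using True assms by (cases "i = l") (simp_all add: e_idem e_orth)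
next
  case False
  thus ?thesis using assms by (simp add: e_orth)
qed

lemma reverse:
  assumes D: "D \<subseteq> HH1 sc n e" and dz: "\<forall>f\<in>D. HH1_diagonalizable sc f"
  and bz: "\<forall>f\<in>D. \<forall>f'\<in>D. HH1_bracket sc n e f f' = HH1_zero sc n e"
  shows "HH1_set_diagonalizable sc n e D"
proof -
  define df where "df f = (SOME d. d \<in> f \<and> diagonalizable_map sc d)" for f
  have df: "df f \<in> f \<and> diagonalizable_map sc (df f)" if "f \<in> D" for f
  proof -
    have "\<exists>d. d \<in> f \<and> diagonalizable_map sc d" using dz that unfolding HH1_diagonalizable_def by blast
    thus ?thesis unfolding df_def by (rule someI_ex)
  qed
  have dfD: "df f \<in> Der0 sc n e" if "f \<in> D" for f using class_rel(1)[of f "df f" "df f"] D that df by blast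
  have comm: "df f (df g a) = df g (df f a)" if fg: "f \<in> D" "g \<in> D" for f g a
  proof -
    have f: "f \<in> HH1 sc n e" and g: "g \<in> HH1 sc n e" using fg D by auto
    define d0 where "d0 = (SOME d. d \<in> f)"
    define d0' where "d0' = (SOME d. d \<in> g)"
    have d0f: "d0 \<in> f" and d0g: "d0' \<in> g" unfolding d0_def d0'_def using some_in f g by auto
    obtain x where x: "x \<in> Esub sc n e" "\<forall>a. d0 (d0' a) - d0' (d0 a) = dl x a"
      using bracket_zero_Int[OF f g] bz fg unfolding d0_def d0'_def by blast
    obtain x1 where x1: "x1 \<in> Esub sc n e" "\<forall>a. df f a = d0 a + dl x1 a"
      using class_rel(2)[OF f _ d0f] df fg by blast
    obtain y1 where y1: "y1 \<in> Esub sc n e" "\<forall>a. df g a = d0' a + dl y1 a"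
      using class_rel(2)[OF g _ d0g] df fg by blast
    have "df f (df g b) - df g (df f b) = dl x b" for b
      using comm_shift[OF class_rel(1)[OF f d0f d0f] class_rel(1)[OF g d0g d0g] x1(1) y1(1), of "df f" "df g" b]
        x1(2) y1(2) x(2) by simp
    thus ?thesis using comm_all[OF dfD[OF fg(1)] dfD[OF fg(2)] _ x(1)] df fg by blast
  qed
  define Fam where "Fam = df ` D"
  define C where "C = {v. \<forall>d\<in>Fam. \<exists>c. d v = sc c v}"
  define W where "W j i = {e j * a * e i | a. True}" for j i
  have Wsub: "subspace (W j i)" for j i
    unfolding W_def
  proof (rule subspaceI)
    show "0 \<in> {e j * a * e i |a. True}" by (auto intro!: exI[of _ 0])
    fix x y assume "x \<in> {e j * a * e i |a. True}" "y \<in> {e j * a * e i |a. True}"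
    then obtain a b where "x = e j * a * e i" "y = e j * b * e i" by blast
    hence "x + y = e j * (a + b) * e i" by (simp add: algebra_simps)
    thus "x + y \<in> {e j * a * e i |a. True}" by blast
  next
    fix c x assume "x \<in> {e j * a * e i |a. True}"
    then obtain a where "x = e j * a * e i" by blast
    hence "sc c x = e j * sc c a * e i" by (simp add: sc_mult_left sc_mult_right)
    thus "sc c x \<in> {e j * a * e i |a. True}" by blast
  qed
  have Winv: "d w \<in> W j i" if dF: "d \<in> Fam" and wW: "w \<in> W j i" and jn: "j < n" and "i < n" for d w j i
  proof -
    obtain f where f: "f \<in> D" "d = df f" using dF unfolding Fam_def by blast
    obtain a where "w = e j * a * e i" using wW unfolding W_def by blast
    thus ?thesis using der_corner[OF dfD[OF f(1)] \<open>i < n\<close> jn] f(2) unfolding W_def by blast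
  qed
  have SDr: "W j i \<subseteq> span (C \<inter> W j i)" if "j < n" "i < n" for j i
    unfolding C_def
  proof (rule SD[of Fam, OF _ _ _ Wsub])
    fix d assume "d \<in> Fam"
    then obtain f where f: "f \<in> D" "d = df f" unfolding Fam_def by blast
    show "lin d" unfolding f(2) by (rule Der0D(1)[OF dfD[OF f(1)]])
  next
    fix d assume "d \<in> Fam"
    then obtain f where f: "f \<in> D" "d = df f" unfolding Fam_def by blast
    have "diagonalizable_map sc d" using df[OF f(1)] f(2) by simp
    thus "\<exists>B. is_vs_basis sc B \<and> diagonal_wrt sc d B" unfolding diagonalizable_map_def .
  next
    fix d d' x assume "d \<in> Fam" "d' \<in> Fam"
    then obtain f g where "f \<in> D" "d = df f" "g \<in> D" "d' = df g" unfolding Fam_def by blast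
    thus "d (d' x) = d' (d x)" using comm by simp
  next
    fix d w assume "d \<in> Fam" "w \<in> W j i"
    thus "d w \<in> W j i" by (rule Winv[OF _ _ that])
  qed
  define Bj where "Bj j i = (SOME B'. B' \<subseteq> C \<inter> W j i \<and> independent B' \<and> C \<inter> W j i \<subseteq> span B')" for j i
  have Bj: "Bj j i \<subseteq> C \<inter> W j i \<and> independent (Bj j i) \<and> C \<inter> W j i \<subseteq> span (Bj j i)" for j i
  proof -
    obtain B' where "B' \<subseteq> C \<inter> W j i" "independent B'" "C \<inter> W j i \<subseteq> span B'"
      by (rule maximal_independent_subset)
    hence "\<exists>B'. B' \<subseteq> C \<inter> W j i \<and> independent B' \<and> C \<inter> W j i \<subseteq> span B'" by blast
    thus ?thesis unfolding Bj_def by (rule someI_ex)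
  qed
  have Bj1: "Bj j i \<subseteq> C \<inter> W j i" and Bj2: "independent (Bj j i)" and Bj3: "C \<inter> W j i \<subseteq> span (Bj j i)" for j i
    using Bj[of j i] by auto
  have WBj: "W j i \<subseteq> span (Bj j i)" if "j < n" "i < n" for j i
  proof -
    have "W j i \<subseteq> span (C \<inter> W j i)" by (rule SDr[OF that])
    also have "\<dots> \<subseteq> span (span (Bj j i))" by (rule span_mono[OF Bj3])
    finally show ?thesis by (simp add: span_span)
  qed
  define PP where "PP = {p. fst p < n \<and> snd p < n \<and> fst p \<noteq> snd p}"
  define BB where "BB = (\<Union>p\<in>PP. Bj (fst p) (snd p)) \<union> e ` {..<n}"
  have BBcases: "v \<in> BB \<Longrightarrow> (\<exists>j i. j < n \<and> i < n \<and> j \<noteq> i \<and> v \<in> Bj j i) \<or> (\<exists>l<n. v = e l)" for v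
    unfolding BB_def PP_def by auto
  have BjW: "v \<in> Bj j i \<Longrightarrow> \<exists>a. v = e j * a * e i" for v j i using Bj1[of j i] unfolding W_def by blast
  have indep: "independent BB"
    unfolding independent_explicit_module
  proof (intro allI impI)
    fix t u v assume t: "finite t" "t \<subseteq> BB" "(\<Sum>v\<in>t. sc (u v) v) = 0" "v \<in> t"
    have proj: "(\<Sum>v'\<in>t. sc (u v') (e j * v' * e i)) = 0" for j i
    proof -
      have "e j * (\<Sum>v\<in>t. sc (u v) v) * e i = 0" using t(3) by simp
      thus ?thesis by (simp add: sum_distrib_left sum_distrib_right sc_mult_left sc_mult_right)
    qed
    have vB: "v \<in> BB" using t(2,4) by blast
    from BBcases[OF vB] show "u v = 0"
    proof (elim disjE exE conjE)
      fix j0 i0 assume ji: "j0 < n" "i0 < n" "j0 \<noteq> i0" "v \<in> Bj j0 i0"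
      have pv: "e j0 * v' * e i0 = (if v' \<in> Bj j0 i0 then v' else 0)" if "v' \<in> t" for v'
      proof (cases "v' \<in> Bj j0 i0")
        case True
        then obtain a where "v' = e j0 * a * e i0" using BjW by blast
        thus ?thesis using True Pb[OF ji(1,2) ji(1,2)] by simp
      next
        case False
        have "v' \<in> BB" using that t(2) by blast
        from BBcases[OF this] show ?thesis
        proof (elim disjE exE conjE)
          fix j' i' assume "j' < n" "i' < n" "j' \<noteq> i'" "v' \<in> Bj j' i'"
          then obtain a where "v' = e j' * a * e i'" using BjW by blast
          hence "e j0 * v' * e i0 = (if j0 = j' \<and> i0 = i' then v' else 0)"
            using Pb[OF ji(1,2) \<open>j' < n\<close> \<open>i' < n\<close>] by simp
          thus ?thesis using False \<open>v' \<in> Bj j' i'\<close> by auto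
        next
          fix l assume "l < n" "v' = e l"
          thus ?thesis using Pe[OF ji(1,2) \<open>l < n\<close>] ji(3) False by auto
        qed
      qed
      have "(\<Sum>v'\<in>t. sc (u v') (e j0 * v' * e i0)) = (\<Sum>v'\<in>t. if v' \<in> Bj j0 i0 then sc (u v') v' else 0)"
        by (rule sum.cong) (simp_all add: pv)
      also have "\<dots> = (\<Sum>v'\<in>{v'\<in>t. v' \<in> Bj j0 i0}. sc (u v') v')"
        by (rule sum.inter_filter[OF t(1), symmetric])
      finally have "(\<Sum>v'\<in>{v'\<in>t. v' \<in> Bj j0 i0}. sc (u v') v') = 0" using proj[of j0 i0] by simp
      moreover have "finite {v'\<in>t. v' \<in> Bj j0 i0}" using t(1) by simp
      ultimately show "u v = 0"
        using independentD[OF Bj2[of j0 i0], of "{v'\<in>t. v' \<in> Bj j0 i0}" u v] ji(4) t(4) by blast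
    next
      fix l assume l: "l < n" "v = e l"
      have pv: "e l * v' * e l = (if v' = e l then e l else 0)" if "v' \<in> t" for v'
      proof -
        have "v' \<in> BB" using that t(2) by blast
        from BBcases[OF this] show ?thesis
        proof (elim disjE exE conjE)
          fix j' i' assume "j' < n" "i' < n" "j' \<noteq> i'" "v' \<in> Bj j' i'"
          then obtain a where va: "v' = e j' * a * e i'" using BjW by blast
          hence z: "e l * v' * e l = 0" using Pb[OF l(1) l(1) \<open>j' < n\<close> \<open>i' < n\<close>] \<open>j' \<noteq> i'\<close> by auto
          have "v' \<noteq> e l"
          proof
            assume "v' = e l"
            hence "e l * v' * e l = e l" using e_idem[OF l(1)] by simp
            thus False using z e_nz[OF l(1)] by simp
          qed
          thus ?thesis using z by simp
        next
          fix l' assume "l' < n" "v' = e l'"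
          thus ?thesis using Pe[OF l(1) l(1) \<open>l' < n\<close>] e_inj[OF l(1) \<open>l' < n\<close>] by auto
        qed
      qed
      have "(\<Sum>v'\<in>t. sc (u v') (e l * v' * e l)) = (\<Sum>v'\<in>t. if v' = e l then sc (u (e l)) (e l) else 0)"
        by (rule sum.cong) (simp_all add: pv)
      also have "\<dots> = sc (u (e l)) (e l)" using t(1,4) l(2) by (simp add: sum.delta')
      finally have "sc (u (e l)) (e l) = 0" using proj[of l l] by simp
      thus "u v = 0" using e_nz[OF l(1)] l(2) by simp
    qed
  qed
  have spanBB: "span BB = UNIV"
  proof -
    have "a \<in> span BB" for a
    proof -
      have "(\<Sum>j<n. \<Sum>i<n. e j * a * e i) \<in> span BB"
      proof (intro span_sum)
        fix j i assume "j \<in> {..<n}" "i \<in> {..<n}"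
        hence ji: "j < n" "i < n" by auto
        show "e j * a * e i \<in> span BB"
        proof (cases "j = i")
          case True
          obtain c where "e j * a * e i = sc c (e i)" using diag_corner[OF ji(2)] inC_mk[OF ji] True by blast
          moreover have "e i \<in> BB" unfolding BB_def using ji by auto
          ultimately show ?thesis by (simp add: span_base span_scale)
        next
          case False
          have "e j * a * e i \<in> W j i" unfolding W_def by blast
          hence "e j * a * e i \<in> span (Bj j i)" using WBj[OF ji] by blast
          moreover have "Bj j i \<subseteq> BB"
          proof
            fix v assume "v \<in> Bj j i"
            have "(j, i) \<in> PP" unfolding PP_def using ji False by simp
            moreover have "v \<in> Bj (fst (j, i)) (snd (j, i))" using \<open>v \<in> Bj j i\<close> by simp
            ultimately have "v \<in> (\<Union>p\<in>PP. Bj (fst p) (snd p))" by (rule UN_I)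
            thus "v \<in> BB" unfolding BB_def by (rule UnI1)
          qed
          ultimately show ?thesis using span_mono by blast
        qed
      qed
      thus ?thesis using decomp[of a] by simp
    qed
    thus ?thesis by auto
  qed
  have "algebra_basis sc n e BB"
    unfolding algebra_basis_def is_vs_basis_def
  proof (intro conjI indep spanBB)
    show "BB \<subseteq> (\<Union>i<n. \<Union>j<n. {e j * a * e i |a. True})"
    proof
      fix v assume "v \<in> BB"
      from BBcases[OF this] show "v \<in> (\<Union>i<n. \<Union>j<n. {e j * a * e i |a. True})"
      proof (elim disjE exE conjE)
        fix j i assume ji: "j < n" "i < n" "j \<noteq> i" "v \<in> Bj j i"
        then obtain a where "v = e j * a * e i" using BjW by blast
        hence "v \<in> {e j * a * e i |a. True}" by blast
        hence "v \<in> (\<Union>j<n. {e j * a * e i |a. True})" using ji(1) by blast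
        thus ?thesis using ji(2) by blast
      next
        fix l assume "l < n" "v = e l"
        hence "v = e l * e l * e l" using e_idem by simp
        hence "v \<in> {e l * a * e l |a. True}" by blast
        hence "v \<in> (\<Union>j<n. {e j * a * e l |a. True})" using \<open>l < n\<close> by blast
        thus ?thesis using \<open>l < n\<close> by blast
      qed
    qed
    show "e ` {..<n} \<subseteq> BB" unfolding BB_def by blast
    show "BB - e ` {..<n} \<subseteq> radical"
    proof
      fix v assume v: "v \<in> BB - e ` {..<n}"
      hence "\<exists>j i. j < n \<and> i < n \<and> j \<noteq> i \<and> v \<in> Bj j i" using BBcases by blast
      then obtain j i a where "j < n" "i < n" "j \<noteq> i" "v = e j * a * e i" using BjW by blast
      thus "v \<in> radical" using F1[OF \<open>i < n\<close> \<open>j < n\<close> _ inC_mk[OF \<open>j < n\<close> \<open>i < n\<close>]] by auto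
    qed
  qed
  moreover have "\<forall>f\<in>D. HH1_diagonal_wrt sc f BB"
  proof
    fix f assume f: "f \<in> D"
    have "diagonal_wrt sc (df f) BB" unfolding diagonal_wrt_def
    proof
      fix b assume "b \<in> BB"
      from BBcases[OF this] show "\<exists>c. df f b = sc c b"
      proof (elim disjE exE conjE)
        fix j i assume "j < n" "i < n" "j \<noteq> i" "b \<in> Bj j i"
        hence "b \<in> C" using Bj1 by blast
        thus ?thesis using f unfolding C_def Fam_def by blast
      next
        fix l assume "l < n" "b = e l"
        hence "df f b = sc 0 b" using Der0D(3)[OF dfD[OF f]] by simp
        thus ?thesis by blast
      qed
    qed
    thus "HH1_diagonal_wrt sc f BB" unfolding HH1_diagonal_wrt_def using df f by blast
  qed
  ultimately show ?thesis unfolding HH1_set_diagonalizable_def by blast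
qed

lemma forward:
  assumes D: "D \<subseteq> HH1 sc n e" and H: "HH1_set_diagonalizable sc n e D"
  shows "(\<forall>f\<in>D. HH1_diagonalizable sc f) \<and> (\<forall>f\<in>D. \<forall>f'\<in>D. HH1_bracket sc n e f f' = HH1_zero sc n e)"
proof -
  obtain B where B: "algebra_basis sc n e B" "\<forall>f\<in>D. HH1_diagonal_wrt sc f B"
    using H unfolding HH1_set_diagonalizable_def by blast
  have vs: "is_vs_basis sc B" using B(1) unfolding algebra_basis_def by blast
  have sp: "span B = UNIV" using vs unfolding is_vs_basis_def by blast
  have rep: "\<exists>d\<in>f. diagonal_wrt sc d B" if "f \<in> D" for f using B(2) that unfolding HH1_diagonal_wrt_def by blast
  show ?thesis
  proof (intro conjI ballI)
    fix f assume "f \<in> D"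
    thus "HH1_diagonalizable sc f" using rep vs unfolding HH1_diagonalizable_def diagonalizable_map_def by blast
  next
    fix f f' assume ff: "f \<in> D" "f' \<in> D"
    obtain d1 where d1: "d1 \<in> f" "diagonal_wrt sc d1 B" using rep ff(1) by blast
    obtain d2 where d2: "d2 \<in> f'" "diagonal_wrt sc d2 B" using rep ff(2) by blast
    have f: "f \<in> HH1 sc n e" and f': "f' \<in> HH1 sc n e" using ff D by auto
    have l1: "lin d1" using Der0D(1)[OF class_rel(1)[OF f d1(1) d1(1)]] .
    have l2: "lin d2" using Der0D(1)[OF class_rel(1)[OF f' d2(1) d2(1)]] .
    show "HH1_bracket sc n e f f' = HH1_zero sc n e"
      by (rule forward_bracket[OF f f' d1(1) d2(1)]) (rule diag_commute[OF l1 l2 d1(2) d2(2) sp])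
  qed
qed

lemma main:
  assumes "D \<subseteq> HH1 sc n e"
  shows "HH1_set_diagonalizable sc n e D \<longleftrightarrow>
           (\<forall>f\<in>D. HH1_diagonalizable sc f) \<and>
           (\<forall>f\<in>D. \<forall>f'\<in>D. HH1_bracket sc n e f f' = HH1_zero sc n e)"
  using forward[OF assms] reverse[OF assms] by blast

end

theorem proposition2p3:
  fixes sc :: "'k::field \<Rightarrow> 'a::ring_1 \<Rightarrow> 'a"
    and n :: nat and e :: "nat \<Rightarrow> 'a"
    and D :: "('a \<Rightarrow> 'a) set set"
  assumes "alg_closed_field TYPE('k)"
    and "finite_dim_algebra sc"
    and "complete_primitive_orthogonal_idempotents n e"
    and "basic_algebra sc n e"
    and "connected_algebra TYPE('a)"
    and "quiver_acyclic sc n e"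
    and "D \<subseteq> HH1 sc n e"
  shows "HH1_set_diagonalizable sc n e D \<longleftrightarrow>
           (\<forall>f\<in>D. HH1_diagonalizable sc f) \<and>
           (\<forall>f\<in>D. \<forall>f'\<in>D. HH1_bracket sc n e f f' = HH1_zero sc n e)"
proof -
  obtain S where S: "finite S" "module.span sc S = UNIV"
    using assms(2) unfolding finite_dim_algebra_def by blast
  have vs: "vector_space sc" and m: "\<forall>c a b. sc c (a * b) = sc c a * b \<and> sc c (a * b) = a * sc c b"
    using assms(2) unfolding finite_dim_algebra_def k_algebra_def by blast+
  have "alg2 sc S n e"
    by (rule alg2.intro[OF alg.intro[OF vs alg_axioms.intro] alg2_axioms.intro])
       (use m S assms(1,3,4,6) in blast)+
  thus ?thesis using alg2.main[OF _ assms(7)] by blast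
qed

end
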